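(* Every solvable subgroup of $PL_o(I)$ is countable.
   Context: $PL_o(I)$ is the group of orientation-preserving piecewise-linear homeomorphisms of $I=[0,1]$ with finitely many breaks in slope. *)

theory Defs
  imports "HOL-Analysis.Analysis" "HOL-Algebra.Solvable_Groups"
begin

definition PL_on_I :: "(real \<Rightarrow> real) \<Rightarrow> bool" where
  "PL_on_I f \<longleftrightarrow> (\<exists>xs::real list. length xs \<ge> 2 \<and> sorted_wrt (<) xs \<and>
      hd xs = 0 \<and> last xs = 1 \<and>
      (\<forall>i. Suc i < length xs \<longrightarrow>
         (\<exists>a b. \<forall>x\<in>{xs ! i .. xs ! Suc i}. f x = a * x + b)))"

text \<open>Elements of PL_o(I), represented as functions on the reals that are the identity
  outside [0,1] (so that composition is the group operation).\<close>
definition PLo :: "(real \<Rightarrow> real) set" where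
  "PLo = {f. (\<exists>g. homeomorphism {0..1} {0..1} f g) \<and> strict_mono_on {0..1} f \<and>
             PL_on_I f \<and> (\<forall>x. x \<notin> {0..1} \<longrightarrow> f x = x)}"

definition PLo_group :: "(real \<Rightarrow> real) monoid" where
  "PLo_group = \<lparr> carrier = PLo, monoid.mult = (\<lambda>f g. f \<circ> g), one = id \<rparr>"

end

theory Submission
  imports Defs
begin

lemma PLo_homeo: "f \<in> PLo \<Longrightarrow> \<exists>g. homeomorphism {0..1} {0..1} f g"
  by (simp add: PLo_def)

lemma PLo_cont: "f \<in> PLo \<Longrightarrow> continuous_on {0..1} f"
  unfolding PLo_def homeomorphism_def by auto

lemma PLo_img: "f \<in> PLo \<Longrightarrow> f ` {0..1} = {0..1}"
  unfolding PLo_def homeomorphism_def by auto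

lemma PLo_smono: "f \<in> PLo \<Longrightarrow> strict_mono_on {0..1} f"
  unfolding PLo_def by auto

lemma PLo_out: "f \<in> PLo \<Longrightarrow> t \<notin> {0..1} \<Longrightarrow> f t = t"
  unfolding PLo_def by auto

lemma PLo_PL: "f \<in> PLo \<Longrightarrow> PL_on_I f"
  unfolding PLo_def by auto

lemma PLo_in01: assumes "f \<in> PLo" "t \<in> {0..1}" shows "f t \<in> {0..1}"
  using PLo_img[OF assms(1)] assms(2) by blast

lemma PLo_0: assumes "f \<in> PLo" shows "f 0 = 0"
proof -
  have "0 \<in> f ` {0..1}" using PLo_img[OF assms] by auto
  then obtain s where s: "s \<in> {0..1}" "f s = 0" by auto
  have "f 0 \<le> f s"
  proof (cases "s = 0")
    case False
    then have "f 0 < f s" using strict_mono_onD[OF PLo_smono[OF assms], of 0 s] s(1) by auto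
    then show ?thesis by simp
  qed simp
  moreover have "f 0 \<ge> 0" using PLo_in01[OF assms, of 0] by auto
  ultimately show ?thesis using s by simp
qed

lemma PLo_1: assumes "f \<in> PLo" shows "f 1 = 1"
proof -
  have "1 \<in> f ` {0..1}" using PLo_img[OF assms] by auto
  then obtain s where s: "s \<in> {0..1}" "f s = 1" by auto
  have "f s \<le> f 1"
  proof (cases "s = 1")
    case False
    then have "f s < f 1" using strict_mono_onD[OF PLo_smono[OF assms], of s 1] s(1) by auto
    then show ?thesis by simp
  qed simp
  moreover have "f 1 \<le> 1" using PLo_in01[OF assms, of 1] by auto
  ultimately show ?thesis using s by simp
qed

lemma PLo_less: assumes "f \<in> PLo" "s < t" shows "f s < f t"
proof -
  have m: "\<And>u v. u \<in> {0..1} \<Longrightarrow> v \<in> {0..1} \<Longrightarrow> u < v \<Longrightarrow> f u < f v"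
    using PLo_smono[OF assms(1)] by (simp add: strict_mono_on_def)
  have i: "\<And>u. u \<in> {0..1} \<Longrightarrow> f u \<in> {0..1}" using PLo_in01[OF assms(1)] by auto
  show ?thesis
  proof (cases "s \<in> {0..1}")
    case True
    show ?thesis
    proof (cases "t \<in> {0..1}")
      case True with \<open>s \<in> {0..1}\<close> m assms(2) show ?thesis by auto
    next
      case False
      then have "t > 1" using assms(2) True by auto
      then show ?thesis using i[OF True] PLo_out[OF assms(1) False] by auto
    qed
  next
    case False
    note sf = PLo_out[OF assms(1) False]
    show ?thesis
    proof (cases "t \<in> {0..1}")
      case True
      then have "s < 0" using assms(2) False by auto
      then show ?thesis using i[OF True] sf by auto
    next
      case False
      then show ?thesis using sf PLo_out[OF assms(1) False] assms(2) by auto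
    qed
  qed
qed

lemma PLo_less_iff: assumes "f \<in> PLo" shows "f s < f t \<longleftrightarrow> s < t"
proof
  assume "f s < f t"
  show "s < t"
  proof (rule ccontr)
    assume "\<not> s < t"
    then have "t < s \<or> t = s" by auto
    then show False using PLo_less[OF assms, of t s] \<open>f s < f t\<close> by auto
  qed
qed (rule PLo_less[OF assms])

lemma PLo_le_iff: "f \<in> PLo \<Longrightarrow> f s \<le> f t \<longleftrightarrow> s \<le> t"
  using PLo_less_iff[of f t s] by auto

lemma PLo_eq_iff: "f \<in> PLo \<Longrightarrow> f s = f t \<longleftrightarrow> s = t"
  using PLo_le_iff[of f s t] PLo_le_iff[of f t s] by auto

lemma PLo_inj: "f \<in> PLo \<Longrightarrow> inj f"
  by (simp add: inj_def PLo_eq_iff)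

lemma PLo_surj: assumes "f \<in> PLo" shows "surj f"
proof -
  have "y \<in> range f" for y
  proof (cases "y \<in> {0..1}")
    case True then show ?thesis using PLo_img[OF assms] by blast
  next
    case False then show ?thesis using PLo_out[OF assms False] by (metis rangeI)
  qed
  then show ?thesis by auto
qed

abbreviation finv :: "(real \<Rightarrow> real) \<Rightarrow> real \<Rightarrow> real" where "finv f \<equiv> inv_into UNIV f"

lemma PLo_inv_f: "f \<in> PLo \<Longrightarrow> finv f (f x) = x"
  by (simp add: PLo_inj)

lemma PLo_f_inv: "f \<in> PLo \<Longrightarrow> f (finv f x) = x"
  by (simp add: PLo_surj surj_f_inv_f)

lemma PLo_comp_inv: "f \<in> PLo \<Longrightarrow> f \<circ> finv f = id"
  by (auto simp: PLo_f_inv)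

lemma PLo_inv_comp: "f \<in> PLo \<Longrightarrow> finv f \<circ> f = id"
  by (auto simp: PLo_inv_f)

lemma sorted_find_piece:
  fixes xs :: "real list"
  assumes "sorted_wrt (<) xs" "length xs \<ge> 2" "xs ! 0 \<le> p" "p < last xs"
  shows "\<exists>i. Suc i < length xs \<and> xs ! i \<le> p \<and> p < xs ! Suc i"
proof -
  define J where "J = {j. j < length xs \<and> xs ! j \<le> p}"
  have fin: "finite J" unfolding J_def by auto
  have ne: "0 \<in> J" using assms unfolding J_def by auto
  define i where "i = Max J"
  have iJ: "i \<in> J" unfolding i_def using Max_in[OF fin] ne by auto
  have "xs \<noteq> []" using assms(2) by auto
  then have lastn: "last xs = xs ! (length xs - 1)" by (simp add: last_conv_nth)
  have "i \<noteq> length xs - 1" using iJ assms(4) lastn unfolding J_def by auto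
  then have si: "Suc i < length xs" using iJ unfolding J_def by auto
  have "Suc i \<notin> J" using fin unfolding i_def
    by (metis Max_ge Suc_n_not_le_n)
  then have "p < xs ! Suc i" using si unfolding J_def by auto
  then show ?thesis using si iJ unfolding J_def by auto
qed

lemma sorted_find_piece_left:
  fixes xs :: "real list"
  assumes "sorted_wrt (<) xs" "length xs \<ge> 2" "xs ! 0 < p" "p \<le> last xs"
  shows "\<exists>i. Suc i < length xs \<and> xs ! i < p \<and> p \<le> xs ! Suc i"
proof -
  define J where "J = {j. j < length xs \<and> p \<le> xs ! j}"
  have "xs \<noteq> []" using assms(2) by auto
  then have lastn: "last xs = xs ! (length xs - 1)" by (simp add: last_conv_nth)
  have ne: "length xs - 1 \<in> J" using assms lastn unfolding J_def by auto
  define k where "k = Min J"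
  have fin: "finite J" unfolding J_def by auto
  have kJ: "k \<in> J" unfolding k_def using Min_in[OF fin] ne by auto
  have "k \<noteq> 0"
  proof
    assume "k = 0" then show False using kJ assms(3) unfolding J_def by auto
  qed
  then obtain i where ki: "k = Suc i" by (cases k) auto
  have "i \<notin> J" using fin ki unfolding k_def by (metis Min_le Suc_n_not_le_n)
  then show ?thesis using kJ ki unfolding J_def by auto
qed

lemma PL_pieces:
  assumes "f \<in> PLo"
  obtains xs where "length xs \<ge> 2" "sorted_wrt (<) xs" "xs ! 0 = 0" "last xs = 1"
    "\<And>i. Suc i < length xs \<Longrightarrow> \<exists>a b. \<forall>x\<in>{xs ! i .. xs ! Suc i}. f x = a * x + b"
proof -
  obtain xs where xs: "length xs \<ge> 2" "sorted_wrt (<) xs" "hd xs = 0" "last xs = 1"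
    "\<forall>i. Suc i < length xs \<longrightarrow> (\<exists>a b. \<forall>x\<in>{xs ! i .. xs ! Suc i}. f x = a * x + b)"
    using PLo_PL[OF assms] unfolding PL_on_I_def by blast
  have "xs \<noteq> []" using xs(1) by auto
  then have "xs ! 0 = 0" using xs(3) by (simp add: hd_conv_nth)
  then show ?thesis using that xs by blast
qed

lemma PLo_RLA:
  assumes "f \<in> PLo" "0 \<le> p" "p < 1"
  shows "\<exists>\<eta>>0. \<exists>\<kappa>>0. \<forall>t\<in>{p..p+\<eta>}. f t = f p + \<kappa> * (t - p)"
proof -
  obtain xs where xs: "length xs \<ge> 2" "sorted_wrt (<) xs" "xs ! 0 = 0" "last xs = 1"
    "\<And>i. Suc i < length xs \<Longrightarrow> \<exists>a b. \<forall>x\<in>{xs ! i .. xs ! Suc i}. f x = a * x + b"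
    using PL_pieces[OF assms(1)] by blast
  obtain i where i: "Suc i < length xs" "xs ! i \<le> p" "p < xs ! Suc i"
    using sorted_find_piece[OF xs(2,1)] xs(3,4) assms by auto
  obtain a b where ab: "\<forall>x\<in>{xs ! i .. xs ! Suc i}. f x = a * x + b" using xs(5)[OF i(1)] by blast
  define \<eta> where "\<eta> = xs ! Suc i - p"
  have eta: "\<eta> > 0" using i unfolding \<eta>_def by auto
  have aff: "\<forall>t\<in>{p..p+\<eta>}. f t = f p + a * (t - p)"
  proof
    fix t assume "t \<in> {p..p+\<eta>}"
    then have "t \<in> {xs ! i .. xs ! Suc i}" "p \<in> {xs ! i .. xs ! Suc i}" using i unfolding \<eta>_def by auto
    then show "f t = f p + a * (t - p)" using ab by (auto simp: algebra_simps)
  qed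
  have "f p < f (p + \<eta>)" using PLo_less[OF assms(1)] eta by auto
  moreover have "f (p + \<eta>) = f p + a * \<eta>" using bspec[OF aff, of "p + \<eta>"] eta by simp
  ultimately have "a * \<eta> > 0" by auto
  then have "a > 0" using eta by (simp add: zero_less_mult_iff)
  then have a0: "a > 0" .
  show ?thesis by (rule exI[where x=\<eta>], rule conjI[OF eta], rule exI[where x=a], rule conjI[OF a0 aff])
qed

lemma PLo_LLA:
  assumes "f \<in> PLo" "0 < p" "p \<le> 1"
  shows "\<exists>\<eta>>0. \<exists>\<kappa>>0. \<forall>t\<in>{p-\<eta>..p}. f t = f p + \<kappa> * (t - p)"
proof -
  obtain xs where xs: "length xs \<ge> 2" "sorted_wrt (<) xs" "xs ! 0 = 0" "last xs = 1"
    "\<And>i. Suc i < length xs \<Longrightarrow> \<exists>a b. \<forall>x\<in>{xs ! i .. xs ! Suc i}. f x = a * x + b"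
    using PL_pieces[OF assms(1)] by blast
  obtain i where i: "Suc i < length xs" "xs ! i < p" "p \<le> xs ! Suc i"
    using sorted_find_piece_left[OF xs(2,1)] xs(3,4) assms by auto
  obtain a b where ab: "\<forall>x\<in>{xs ! i .. xs ! Suc i}. f x = a * x + b" using xs(5)[OF i(1)] by blast
  define \<eta> where "\<eta> = p - xs ! i"
  have eta: "\<eta> > 0" using i unfolding \<eta>_def by auto
  have aff: "\<forall>t\<in>{p-\<eta>..p}. f t = f p + a * (t - p)"
  proof
    fix t assume "t \<in> {p-\<eta>..p}"
    then have "t \<in> {xs ! i .. xs ! Suc i}" "p \<in> {xs ! i .. xs ! Suc i}" using i unfolding \<eta>_def by auto
    then show "f t = f p + a * (t - p)" using ab by (auto simp: algebra_simps)
  qed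
  have "f (p - \<eta>) < f p" using PLo_less[OF assms(1)] eta by auto
  moreover have "f (p - \<eta>) = f p + a * (- \<eta>)" using bspec[OF aff, of "p - \<eta>"] eta by simp
  ultimately have "a * \<eta> > 0" by auto
  then have "a > 0" using eta by (simp add: zero_less_mult_iff)
  then have a0: "a > 0" .
  show ?thesis by (rule exI[where x=\<eta>], rule conjI[OF eta], rule exI[where x=a], rule conjI[OF a0 aff])
qed

lemma finv_in01: assumes "f \<in> PLo" "y \<in> {0..1}" shows "finv f y \<in> {0..1}"
proof (rule ccontr)
  assume "finv f y \<notin> {0..1}"
  then have "f (finv f y) = finv f y" using PLo_out[OF assms(1)] by auto
  then show False using PLo_f_inv[OF assms(1), of y] assms(2) \<open>finv f y \<notin> {0..1}\<close> by auto
qed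

lemma finv_PLo: assumes f: "f \<in> PLo" shows "finv f \<in> PLo"
proof -
  obtain g where g: "homeomorphism {0..1} {0..1} f g" using PLo_homeo[OF f] by blast
  have gi: "\<And>y. y \<in> {0..1} \<Longrightarrow> g y = finv f y"
  proof -
    fix y :: real assume "y \<in> {0..1}"
    then have "f (g y) = y" using g unfolding homeomorphism_def by auto
    then show "g y = finv f y" using PLo_inv_f[OF f, of "g y"] by simp
  qed
  have cg: "continuous_on {0..1} g" using g unfolding homeomorphism_def by auto
  have c: "continuous_on {0..1} (finv f)" using continuous_on_cong[of "{0..1}" "{0..1}" g "finv f"] cg gi by auto
  have img: "finv f ` {0..1} = {0..1}"
  proof
    show "finv f ` {0..1} \<subseteq> {0..1}" using finv_in01[OF f] by auto
    show "{0..1} \<subseteq> finv f ` {0..1}"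
    proof
      fix x :: real assume "x \<in> {0..1}"
      then have "f x \<in> {0..1}" "finv f (f x) = x" using PLo_in01[OF f] PLo_inv_f[OF f] by auto
      then show "x \<in> finv f ` {0..1}" by (metis imageI)
    qed
  qed
  have hom: "homeomorphism {0..1} {0..1} (finv f) f"
    unfolding homeomorphism_def using c img PLo_img[OF f] PLo_cont[OF f] PLo_f_inv[OF f] PLo_inv_f[OF f]
    by auto
  have sm: "strict_mono_on {0..1} (finv f)"
  proof (rule strict_mono_onI)
    fix r s :: real assume "r < s"
    then have "f (finv f r) < f (finv f s)" using PLo_f_inv[OF f] by simp
    then show "finv f r < finv f s" using PLo_less_iff[OF f] by blast
  qed
  have out: "\<forall>x. x \<notin> {0..1} \<longrightarrow> finv f x = x"
  proof (intro allI impI)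
    fix x :: real assume "x \<notin> {0..1}"
    then have "f x = x" using PLo_out[OF f] by auto
    then show "finv f x = x" using PLo_inv_f[OF f, of x] by simp
  qed
  obtain xs where xs: "length xs \<ge> 2" "sorted_wrt (<) xs" "xs ! 0 = 0" "last xs = 1"
    "\<And>i. Suc i < length xs \<Longrightarrow> \<exists>a b. \<forall>x\<in>{xs ! i .. xs ! Suc i}. f x = a * x + b"
    using PL_pieces[OF f] by blast
  have pl: "PL_on_I (finv f)"
    unfolding PL_on_I_def
  proof (intro exI[where x="map f xs"] conjI allI impI)
    show "2 \<le> length (map f xs)" using xs by simp
    show "sorted_wrt (<) (map f xs)" using xs(2) by (simp add: sorted_wrt_map PLo_less_iff[OF f])
    have ne: "xs \<noteq> []" using xs(1) by auto
    show "hd (map f xs) = 0" using ne xs(3) PLo_0[OF f] by (simp add: hd_map hd_conv_nth)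
    show "last (map f xs) = 1" using ne xs(4) PLo_1[OF f] by (simp add: last_map)
    fix i assume i: "Suc i < length (map f xs)"
    then have i': "Suc i < length xs" by simp
    obtain a b where ab: "\<forall>x\<in>{xs ! i .. xs ! Suc i}. f x = a * x + b" using xs(5)[OF i'] by blast
    have lt: "xs ! i < xs ! Suc i" using xs(2) i' by (simp add: sorted_wrt_iff_nth_less)
    have e1: "f (xs ! i) = a * xs ! i + b" using bspec[OF ab, of "xs ! i"] lt by simp
    have e2: "f (xs ! Suc i) = a * xs ! Suc i + b" using bspec[OF ab, of "xs ! Suc i"] lt by simp
    have "f (xs ! i) < f (xs ! Suc i)" using PLo_less[OF f lt] .
    then have "a * (xs ! Suc i - xs ! i) > 0" using e1 e2 by (simp add: algebra_simps)
    then have a0: "a > 0" using lt by (simp add: zero_less_mult_iff)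
    have "\<forall>y\<in>{map f xs ! i..map f xs ! Suc i}. finv f y = (1 / a) * y + (- b / a)"
    proof
      fix y assume y: "y \<in> {map f xs ! i..map f xs ! Suc i}"
      then have y': "f (xs ! i) \<le> y" "y \<le> f (xs ! Suc i)" using i' by auto
      have "f (xs ! i) \<le> f (finv f y)" "f (finv f y) \<le> f (xs ! Suc i)" using y' PLo_f_inv[OF f] by auto
      then have "finv f y \<in> {xs ! i .. xs ! Suc i}" using PLo_le_iff[OF f] by auto
      then have "f (finv f y) = a * finv f y + b" using ab by blast
      then have "y = a * finv f y + b" using PLo_f_inv[OF f] by simp
      then show "finv f y = (1 / a) * y + (- b / a)" using a0 by (simp add: field_simps)
    qed
    then show "\<exists>a b. \<forall>x\<in>{map f xs ! i..map f xs ! Suc i}. finv f x = a * x + b" by blast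
  qed
  show ?thesis unfolding PLo_def using hom sm pl out by blast
qed

lemma id_PLo: "id \<in> PLo"
proof -
  have "homeomorphism {0..1} {0..1} id id" unfolding homeomorphism_def by (auto simp: continuous_on_id)
  moreover have "strict_mono_on {0..1} (id :: real \<Rightarrow> real)" by (simp add: strict_mono_on_def)
  moreover have "PL_on_I (id :: real \<Rightarrow> real)" unfolding PL_on_I_def
  proof (intro exI[where x="[0,1]"] conjI allI impI)
    fix i assume "Suc i < length [0::real,1]"
    then have "i = 0" by simp
    then show "\<exists>a b. \<forall>x\<in>{[0::real,1] ! i..[0,1] ! Suc i}. id x = a * x + b"
      by (intro exI[where x=1] exI[where x=0]) auto
  qed auto
  ultimately show ?thesis unfolding PLo_def by auto
qed

lemma inv_PLo_group: assumes "x \<in> PLo" shows "inv\<^bsub>PLo_group\<^esub> x = finv x"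
  unfolding m_inv_def PLo_group_def
proof (simp, rule the_equality)
  show "finv x \<in> PLo \<and> x \<circ> finv x = id \<and> finv x \<circ> x = id"
    using finv_PLo[OF assms] PLo_comp_inv[OF assms] PLo_inv_comp[OF assms] by auto
  fix y assume y: "y \<in> PLo \<and> x \<circ> y = id \<and> y \<circ> x = id"
  show "y = finv x"
  proof
    fix t
    have "y t = y (x (finv x t))" using PLo_f_inv[OF assms] by simp
    also have "\<dots> = finv x t" using y by (metis comp_apply id_apply)
    finally show "y t = finv x t" .
  qed
qed

definition pgrp :: "(real \<Rightarrow> real) set \<Rightarrow> bool" where
  "pgrp K \<longleftrightarrow> K \<subseteq> PLo \<and> id \<in> K \<and> (\<forall>x\<in>K. \<forall>y\<in>K. x \<circ> y \<in> K) \<and> (\<forall>x\<in>K. finv x \<in> K)"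

lemma subgroup_pgrp: assumes "subgroup H PLo_group" shows "pgrp H"
proof -
  interpret subgroup H PLo_group by fact
  have s: "H \<subseteq> PLo" using subset by (simp add: PLo_group_def)
  have "id \<in> H" using one_closed by (simp add: PLo_group_def)
  moreover have "\<forall>x\<in>H. \<forall>y\<in>H. x \<circ> y \<in> H" using m_closed by (simp add: PLo_group_def)
  moreover have "\<forall>x\<in>H. finv x \<in> H"
  proof
    fix x assume x: "x \<in> H"
    have i: "inv\<^bsub>PLo_group\<^esub> x \<in> H" using x by (rule m_inv_closed)
    have "x \<in> PLo" using x s by auto
    then have "inv\<^bsub>PLo_group\<^esub> x = finv x" by (rule inv_PLo_group)
    then show "finv x \<in> H" using i by simp
  qed
  ultimately show ?thesis using s unfolding pgrp_def by auto
qed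

abbreviation GH where "GH H \<equiv> PLo_group\<lparr>carrier := H\<rparr>"

lemma inv_GH: assumes "pgrp H" "x \<in> H" shows "inv\<^bsub>GH H\<^esub> x = finv x"
  unfolding m_inv_def PLo_group_def
proof (simp, rule the_equality)
  have xP: "x \<in> PLo" using assms unfolding pgrp_def by auto
  show "finv x \<in> H \<and> x \<circ> finv x = id \<and> finv x \<circ> x = id"
    using assms PLo_comp_inv[OF xP] PLo_inv_comp[OF xP] unfolding pgrp_def by auto
  fix y assume y: "y \<in> H \<and> x \<circ> y = id \<and> y \<circ> x = id"
  show "y = finv x"
  proof
    fix t
    have "y t = y (x (finv x t))" using PLo_f_inv[OF xP] by simp
    also have "\<dots> = finv x t" using y by (metis comp_apply id_apply)
    finally show "y t = finv x t" .
  qed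
qed

lemma group_GH: assumes "pgrp H" shows "group (GH H)"
proof (rule groupI)
  show "\<And>x y. x \<in> carrier (GH H) \<Longrightarrow> y \<in> carrier (GH H) \<Longrightarrow> x \<otimes>\<^bsub>GH H\<^esub> y \<in> carrier (GH H)"
    using assms unfolding pgrp_def by (simp add: PLo_group_def)
  show "\<one>\<^bsub>GH H\<^esub> \<in> carrier (GH H)" using assms unfolding pgrp_def by (simp add: PLo_group_def)
  show "\<And>x y z. x \<in> carrier (GH H) \<Longrightarrow> y \<in> carrier (GH H) \<Longrightarrow> z \<in> carrier (GH H) \<Longrightarrow>
    x \<otimes>\<^bsub>GH H\<^esub> y \<otimes>\<^bsub>GH H\<^esub> z = x \<otimes>\<^bsub>GH H\<^esub> (y \<otimes>\<^bsub>GH H\<^esub> z)"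
    by (simp add: PLo_group_def comp_assoc)
  show "\<And>x. x \<in> carrier (GH H) \<Longrightarrow> \<one>\<^bsub>GH H\<^esub> \<otimes>\<^bsub>GH H\<^esub> x = x"
    by (simp add: PLo_group_def)
  show "\<And>x. x \<in> carrier (GH H) \<Longrightarrow> \<exists>y\<in>carrier (GH H). y \<otimes>\<^bsub>GH H\<^esub> x = \<one>\<^bsub>GH H\<^esub>"
  proof -
    fix x assume "x \<in> carrier (GH H)"
    then have "x \<in> H" "x \<in> PLo" using assms unfolding pgrp_def by (auto simp: PLo_group_def)
    then show "\<exists>y\<in>carrier (GH H). y \<otimes>\<^bsub>GH H\<^esub> x = \<one>\<^bsub>GH H\<^esub>"
      using assms PLo_inv_comp unfolding pgrp_def by (intro bexI[where x="finv x"]) (auto simp: PLo_group_def)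
  qed
qed

lemma subgroup_GH_pgrp: assumes "pgrp H" "subgroup K (GH H)" shows "pgrp K"
proof -
  interpret subgroup K "GH H" by fact
  have s: "K \<subseteq> H" using subset by (simp add: PLo_group_def)
  then have s': "K \<subseteq> PLo" using assms(1) unfolding pgrp_def by auto
  have "id \<in> K" using one_closed by (simp add: PLo_group_def)
  moreover have "\<forall>x\<in>K. \<forall>y\<in>K. x \<circ> y \<in> K" using m_closed by (simp add: PLo_group_def)
  moreover have "\<forall>x\<in>K. finv x \<in> K"
  proof
    fix x assume x: "x \<in> K"
    have i: "inv\<^bsub>GH H\<^esub> x \<in> K" using x by (rule m_inv_closed)
    have "x \<in> H" using x s by auto
    then have "inv\<^bsub>GH H\<^esub> x = finv x" by (rule inv_GH[OF assms(1)])
    then show "finv x \<in> K" using i by simp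
  qed
  ultimately show ?thesis using s' unfolding pgrp_def by auto
qed

lemma pgrp_funpow: assumes "pgrp K" "g \<in> K" shows "g ^^ n \<in> K"
  using assms by (induction n) (auto simp: pgrp_def funpow_Suc_right simp del: funpow.simps(2))

definition rho :: "real \<Rightarrow> real \<Rightarrow> (real \<Rightarrow> real) \<Rightarrow> real \<Rightarrow> real" where
  "rho a b f = (\<lambda>t. if a \<le> t \<and> t \<le> b then f t else t)"

definition sl :: "real \<Rightarrow> (real \<Rightarrow> real) \<Rightarrow> real" where
  "sl a c = (SOME s. s > 0 \<and> (\<exists>\<delta>>0. \<forall>t\<in>{a..a+\<delta>}. c t = a + s * (t - a)))"

lemma sl_unique:
  fixes c :: "real \<Rightarrow> real"
  assumes "\<forall>t\<in>{a..a+\<delta>1}. c t = a + s1 * (t - a)" "\<delta>1 > 0"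
    "\<forall>t\<in>{a..a+\<delta>2}. c t = a + s2 * (t - a)" "\<delta>2 > 0"
  shows "s1 = s2"
proof -
  define d where "d = min \<delta>1 \<delta>2"
  have d: "d > 0" "d \<le> \<delta>1" "d \<le> \<delta>2" using assms(2,4) unfolding d_def by auto
  have "c (a + d) = a + s1 * d" using bspec[OF assms(1), of "a + d"] d by simp
  moreover have "c (a + d) = a + s2 * d" using bspec[OF assms(3), of "a + d"] d by simp
  ultimately have "s1 * d = s2 * d" by linarith
  then show ?thesis using d(1) by auto
qed

lemma sl_char:
  assumes "c \<in> PLo" "c a = a" "0 \<le> a" "a < 1"
  shows "sl a c > 0 \<and> (\<exists>\<delta>>0. \<forall>t\<in>{a..a+\<delta>}. c t = a + sl a c * (t - a))"
proof -
  obtain \<eta> \<kappa> where e: "\<eta> > 0" "\<kappa> > 0" "\<forall>t\<in>{a..a+\<eta>}. c t = c a + \<kappa> * (t - a)"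
    using PLo_RLA[OF assms(1,3,4)] by blast
  have "\<kappa> > 0 \<and> (\<exists>\<delta>>0. \<forall>t\<in>{a..a+\<delta>}. c t = a + \<kappa> * (t - a))" using e assms(2) by auto
  then show ?thesis unfolding sl_def by (rule someI)
qed

lemma sl_eq:
  assumes "c \<in> PLo" "c a = a" "0 \<le> a" "a < 1" "\<forall>t\<in>{a..a+\<delta>}. c t = a + s * (t - a)" "\<delta> > 0"
  shows "sl a c = s"
proof -
  obtain \<delta>' where "\<delta>' > 0" "\<forall>t\<in>{a..a+\<delta>'}. c t = a + sl a c * (t - a)" using sl_char[OF assms(1-4)] by blast
  then show ?thesis using sl_unique assms(5,6) by blast
qed

lemma funpow_commute:
  assumes "\<And>x. c (g x) = g (c x)" shows "c ((g ^^ n) x) = (g ^^ n) (c x)"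
  by (induction n) (auto simp: assms)

lemma funpow_right_inv:
  fixes f h :: "'a \<Rightarrow> 'a"
  assumes "\<And>y. f (h y) = y" shows "(f ^^ n) ((h ^^ n) y) = y"
proof (induction n arbitrary: y)
  case (Suc n)
  have e1: "(h ^^ Suc n) y = (h ^^ n) (h y)" by (simp only: funpow_Suc_right comp_apply)
  have "(f ^^ Suc n) ((h ^^ Suc n) y) = f ((f ^^ n) ((h ^^ n) (h y)))"
    unfolding e1 by simp
  also have "\<dots> = y" using Suc assms by simp
  finally show ?case .
qed simp

lemma funpow_fix: "g x = x \<Longrightarrow> (g ^^ n) x = x"
  by (induction n) auto

lemma funpow_PLo_mono: assumes "\<And>n. g ^^ n \<in> PLo" shows "s \<le> t \<Longrightarrow> (g ^^ n) s \<le> (g ^^ n) t"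
  using PLo_le_iff[OF assms] by auto

lemma iter_left:
  fixes g :: "real \<Rightarrow> real"
  assumes "lm > 1" "\<forall>t\<in>{a..a+\<epsilon>}. g t = a + lm * (t - a)" "0 \<le> z" "lm ^ k * z \<le> \<epsilon>"
  shows "(g ^^ k) (a + z) = a + lm ^ k * z"
  using assms(4)
proof (induction k)
  case (Suc k)
  have "lm ^ k \<le> lm ^ Suc k" using power_increasing[of k "Suc k" lm] assms(1) by simp
  then have "lm ^ k * z \<le> lm ^ Suc k * z" using assms(3) by (rule mult_right_mono)
  then have le: "lm ^ k * z \<le> \<epsilon>" using Suc.prems by linarith
  then have ih: "(g ^^ k) (a + z) = a + lm ^ k * z" using Suc.IH by simp
  have "0 \<le> lm ^ k * z" using assms(1,3) by simp
  then have "g (a + lm ^ k * z) = a + lm * (lm ^ k * z)" using bspec[OF assms(2), of "a + lm ^ k * z"] le by simp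
  then show ?case using ih by simp
qed simp

lemma iter_right:
  fixes g :: "real \<Rightarrow> real"
  assumes "0 < \<mu>" "\<mu> < 1" "\<forall>t\<in>{b-\<epsilon>..b}. g t = b - \<mu> * (b - t)" "0 \<le> z" "z \<le> \<epsilon>"
  shows "(g ^^ k) (b - z) = b - \<mu> ^ k * z"
proof (induction k)
  case (Suc k)
  have "\<mu> ^ k \<le> 1" using power_le_one[of \<mu> k] assms(1,2) by simp
  then have "\<mu> ^ k * z \<le> 1 * z" using assms(4) by (intro mult_right_mono) auto
  then have le: "\<mu> ^ k * z \<le> \<epsilon>" using assms(5) by linarith
  have "0 \<le> \<mu> ^ k * z" using assms(1,4) by simp
  then have "g (b - \<mu> ^ k * z) = b - \<mu> * (\<mu> ^ k * z)" using bspec[OF assms(3), of "b - \<mu> ^ k * z"] le by simp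
  then show ?case using Suc.IH by simp
qed simp

lemma fix_limit_fwd:
  fixes g :: "real \<Rightarrow> real"
  assumes "continuous_on {0..1} g" "X \<longlonglongrightarrow> L" "\<forall>k. X k \<in> {0..1}" "L \<in> {0..1}"
    "\<forall>k. X (Suc k) = g (X k)"
  shows "g L = L"
proof -
  have "(\<lambda>k. g (X k)) \<longlonglongrightarrow> g L"
    using continuous_on_tendsto_compose[OF assms(1,2,4)] assms(3) by auto
  moreover have "(\<lambda>k. g (X k)) \<longlonglongrightarrow> L" using LIMSEQ_Suc[OF assms(2)] assms(5) by simp
  ultimately show ?thesis using LIMSEQ_unique by blast
qed

lemma fix_limit_bwd:
  fixes g :: "real \<Rightarrow> real"
  assumes "continuous_on {0..1} g" "X \<longlonglongrightarrow> L" "\<forall>k. X k \<in> {0..1}" "L \<in> {0..1}"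
    "\<forall>k. g (X (Suc k)) = X k"
  shows "g L = L"
proof -
  have "(\<lambda>k. X (Suc k)) \<longlonglongrightarrow> L" using LIMSEQ_Suc[OF assms(2)] .
  moreover have "\<forall>\<^sub>F k in sequentially. X (Suc k) \<in> {0..1}" using assms(3) by simp
  ultimately have "(\<lambda>k. g (X (Suc k))) \<longlonglongrightarrow> g L"
    using continuous_on_tendsto_compose[OF assms(1) _ assms(4)] by blast
  then have "X \<longlonglongrightarrow> g L" using assms(5) by simp
  then show ?thesis using LIMSEQ_unique assms(2) by blast
qed

definition stp :: "(real \<Rightarrow> real) set \<Rightarrow> (real \<Rightarrow> real) \<Rightarrow> real \<Rightarrow> real \<Rightarrow> bool" where
  "stp K g a b \<longleftrightarrow> pgrp K \<and> g \<in> K \<and> 0 \<le> a \<and> a < b \<and> b \<le> 1 \<and> g a = a \<and> g b = b \<and>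
     (\<forall>t. a < t \<and> t < b \<longrightarrow> t < g t)"

definition CS :: "(real \<Rightarrow> real) set \<Rightarrow> (real \<Rightarrow> real) \<Rightarrow> real \<Rightarrow> real \<Rightarrow> (real \<Rightarrow> real) set" where
  "CS K g a b = {c \<in> K. c \<circ> g = g \<circ> c \<and> c a = a \<and> c b = b}"

lemma stpD:
  assumes "stp K g a b"
  shows "pgrp K" "g \<in> K" "0 \<le> a" "a < b" "b \<le> 1" "g a = a" "g b = b"
    "\<And>t. a < t \<Longrightarrow> t < b \<Longrightarrow> t < g t" "g \<in> PLo" "\<And>n. g ^^ n \<in> PLo" "\<And>n. g ^^ n \<in> K"
  using assms pgrp_funpow[of K g] unfolding stp_def pgrp_def by auto

lemma CSD:
  assumes "stp K g a b" "c \<in> CS K g a b"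
  shows "c \<in> K" "c \<in> PLo" "\<And>x. c (g x) = g (c x)" "c a = a" "c b = b"
    "\<And>n x. c ((g ^^ n) x) = (g ^^ n) (c x)"
proof -
  have cg: "c \<circ> g = g \<circ> c" using assms(2) unfolding CS_def by auto
  show "\<And>x. c (g x) = g (c x)" using cg by (metis comp_apply)
  then show "\<And>n x. c ((g ^^ n) x) = (g ^^ n) (c x)" by (rule funpow_commute)
  show "c \<in> K" "c a = a" "c b = b" using assms(2) unfolding CS_def by auto
  then show "c \<in> PLo" using stpD(1)[OF assms(1)] unfolding pgrp_def by auto
qed

lemma near_a:
  assumes "stp K g a b"
  obtains \<epsilon> lm where "\<epsilon> > 0" "a + \<epsilon> < b" "lm > 1" "\<forall>t\<in>{a..a+\<epsilon>}. g t = a + lm * (t - a)"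
proof -
  note S = stpD[OF assms]
  obtain \<eta> \<kappa> where e: "\<eta> > 0" "\<kappa> > 0" "\<forall>t\<in>{a..a+\<eta>}. g t = g a + \<kappa> * (t - a)"
    using PLo_RLA[OF S(9) S(3)] S(4,5) by auto
  define \<epsilon> where "\<epsilon> = min \<eta> ((b - a) / 2)"
  have ep: "\<epsilon> > 0" "\<epsilon> \<le> \<eta>" "a + \<epsilon> < b" using e(1) S(4) unfolding \<epsilon>_def min_def by (auto simp: field_simps)
  have aff: "\<forall>t\<in>{a..a+\<epsilon>}. g t = a + \<kappa> * (t - a)" using e(3) ep(2) S(6) by auto
  have "a + \<epsilon> < g (a + \<epsilon>)" using S(8)[of "a + \<epsilon>"] ep by auto
  moreover have "g (a + \<epsilon>) = a + \<kappa> * \<epsilon>" using bspec[OF aff, of "a + \<epsilon>"] ep by simp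
  ultimately have "1 * \<epsilon> < \<kappa> * \<epsilon>" by simp
  then have "\<kappa> > 1" using ep(1) by (simp only: mult_less_cancel_right)
  then show ?thesis using that ep aff by blast
qed

lemma near_b:
  assumes "stp K g a b"
  obtains \<epsilon> \<mu> where "\<epsilon> > 0" "a < b - \<epsilon>" "0 < \<mu>" "\<mu> < 1" "\<forall>t\<in>{b-\<epsilon>..b}. g t = b - \<mu> * (b - t)"
proof -
  note S = stpD[OF assms]
  obtain \<eta> \<kappa> where e: "\<eta> > 0" "\<kappa> > 0" "\<forall>t\<in>{b-\<eta>..b}. g t = g b + \<kappa> * (t - b)"
    using PLo_LLA[OF S(9) _ S(5)] S(3,4) by auto
  define \<epsilon> where "\<epsilon> = min \<eta> ((b - a) / 2)"
  have ep: "\<epsilon> > 0" "\<epsilon> \<le> \<eta>" "a < b - \<epsilon>" using e(1) S(4) unfolding \<epsilon>_def min_def by (auto simp: field_simps)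
  have aff: "\<forall>t\<in>{b-\<epsilon>..b}. g t = b - \<kappa> * (b - t)" using e(3) ep(2) S(7) by (auto simp: algebra_simps)
  have "b - \<epsilon> < g (b - \<epsilon>)" using S(8)[of "b - \<epsilon>"] ep by auto
  moreover have "g (b - \<epsilon>) = b - \<kappa> * \<epsilon>" using bspec[OF aff, of "b - \<epsilon>"] ep by simp
  ultimately have "\<kappa> * \<epsilon> < 1 * \<epsilon>" by simp
  then have "\<kappa> < 1" using ep(1) by (simp only: mult_less_cancel_right)
  then show ?thesis using that ep aff e(2) by blast
qed

lemma fwd_orbit:
  assumes "stp K g a b" "a < p" "p < b" "q < b"
  shows "\<exists>N. q \<le> (g ^^ N) p"
proof (rule ccontr)
  note S = stpD[OF assms(1)]
  assume "\<not> ?thesis"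
  then have lt: "\<forall>N. (g ^^ N) p < q" by (simp add: not_le)
  define X where "X = (\<lambda>k. (g ^^ k) p)"
  have ge: "\<forall>k. p \<le> X k"
  proof
    fix k show "p \<le> X k"
    proof (induction k)
      case (Suc k)
      have "X k < q" using lt unfolding X_def by blast
      then have "X k < b" using assms(4) by linarith
      then have "X k < g (X k)" using S(8) Suc assms(2) by auto
      then show ?case using Suc unfolding X_def by simp
    qed (simp add: X_def)
  qed
  have inc: "incseq X"
  proof (rule incseq_SucI)
    fix k
    have "X k < q" using lt unfolding X_def by blast
      then have "X k < b" using assms(4) by linarith
    moreover have "a < X k" using ge assms(2) by (meson less_le_trans)
    ultimately have "X k < g (X k)" using S(8) by blast
    then show "X k \<le> X (Suc k)" unfolding X_def by simp
  qed
  have bnd: "\<forall>i. X i \<le> q" using lt unfolding X_def by (simp add: less_imp_le)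
  obtain L where L: "X \<longlonglongrightarrow> L" "\<forall>i. X i \<le> L"
    using incseq_convergent[OF inc bnd] by blast
  have Lq: "L \<le> q" using LIMSEQ_le_const2[OF L(1), of q] bnd by blast
  have pL: "p \<le> L" using ge L(2) order_trans by blast
  have X01: "\<forall>k. X k \<in> {0..1}"
  proof
    fix k have "p \<le> X k" "X k \<le> q" using ge bnd by auto
    then show "X k \<in> {0..1}" using assms S(3,5) by auto
  qed
  have L01: "L \<in> {0..1}" using pL Lq assms S(3,5) by auto
  have "g L = L" using fix_limit_fwd[OF PLo_cont[OF S(9)] L(1) X01 L01] unfolding X_def by simp
  moreover have "L < g L" using S(8)[of L] pL Lq assms by auto
  ultimately show False by simp
qed

lemma bwd_orbit:
  assumes "stp K g a b" "a < t" "t < b" "a < q"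
  shows "\<exists>n s. a < s \<and> s \<le> q \<and> (g ^^ n) s = t"
proof (rule ccontr)
  note S = stpD[OF assms(1)]
  assume nex: "\<not> ?thesis"
  define h where "h = finv g"
  have gh: "\<And>y. g (h y) = y" unfolding h_def using PLo_f_inv[OF S(9)] by simp
  have hb: "\<And>y. a < y \<Longrightarrow> y < b \<Longrightarrow> a < h y \<and> h y < y"
  proof -
    fix y assume y: "a < y" "y < b"
    have 1: "a < h y"
    proof (rule ccontr)
      assume "\<not> a < h y"
      then have "g (h y) \<le> g a" using PLo_le_iff[OF S(9)] by simp
      then show False using gh S(6) y by simp
    qed
    have "h y < y"
    proof (rule ccontr)
      assume "\<not> h y < y"
      then have "g y \<le> g (h y)" using PLo_le_iff[OF S(9)] by simp
      then show False using gh S(8)[OF y] by simp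
    qed
    then show "a < h y \<and> h y < y" using 1 by simp
  qed
  define X where "X = (\<lambda>k. (h ^^ k) t)"
  have Xg: "\<And>k. (g ^^ k) (X k) = t" unfolding X_def using funpow_right_inv[of g h] gh by blast
  have Xb: "\<forall>k. a < X k \<and> X k \<le> t"
  proof
    fix k show "a < X k \<and> X k \<le> t"
    proof (induction k)
      case (Suc k)
      then have "a < h (X k) \<and> h (X k) < X k" using hb assms(3) by auto
      then show ?case using Suc unfolding X_def by simp
    qed (simp add: X_def assms)
  qed
  have Xq: "\<forall>k. q < X k" using nex Xg Xb by (meson not_le)
  have dec: "antimono_on UNIV X"
  proof (rule decseq_SucI)
    fix k
    have "h (X k) < X k" using hb Xb assms(3) by (meson le_less_trans)
    then show "X (Suc k) \<le> X k" unfolding X_def by simp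
  qed
  have bnd: "\<forall>i. q \<le> X i" using Xq by (simp add: less_imp_le)
  obtain L where L: "X \<longlonglongrightarrow> L" "\<forall>i. L \<le> X i"
    using decseq_convergent[OF dec bnd] by blast
  have Lq: "q \<le> L" using LIMSEQ_le_const[OF L(1), of q] bnd by blast
  have Lt: "L \<le> t" using L(2) Xb order_trans by blast
  have X01: "\<forall>k. X k \<in> {0..1}"
  proof
    fix k have "a < X k" "X k \<le> t" using Xb by auto
    then show "X k \<in> {0..1}" using assms S(3,5) by auto
  qed
  have L01: "L \<in> {0..1}" using Lq Lt assms S(3,5) by auto
  have "\<forall>k. g (X (Suc k)) = X k" unfolding X_def using gh by simp
  then have "g L = L" using fix_limit_bwd[OF PLo_cont[OF S(9)] L(1) X01 L01] by simp
  moreover have "L < g L" using S(8)[of L] Lq Lt assms by auto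
  ultimately show False by simp
qed

lemma claimL:
  assumes st: "stp K g a b" and ep: "\<epsilon> > 0" "a + \<epsilon> < b" and lm: "lm > 1"
    and ga: "\<forall>t\<in>{a..a+\<epsilon>}. g t = a + lm * (t - a)"
    and c: "c \<in> CS K g a b" and s2: "sl a c \<le> 2" and x: "x \<in> {a..a+\<epsilon>/2}"
  shows "c x = a + sl a c * (x - a)"
proof -
  note S = stpD[OF st]
  note C = CSD[OF st c]
  define \<sigma> where "\<sigma> = sl a c"
  obtain \<delta> where d: "\<delta> > 0" "\<forall>t\<in>{a..a+\<delta>}. c t = a + \<sigma> * (t - a)" and sp: "\<sigma> > 0"
    using sl_char[OF C(2) C(4) S(3)] S(4,5) unfolding \<sigma>_def by auto
  define z where "z = x - a"
  have z: "0 \<le> z" "z \<le> \<epsilon> / 2" using x unfolding z_def by auto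
  obtain n where n: "z / \<delta> < lm ^ n" using real_arch_pow[OF lm] by blast
  have lp: "lm ^ n > 0" using lm by simp
  define w where "w = z / lm ^ n"
  have w0: "0 \<le> w" using z lp unfolding w_def by simp
  have lw: "lm ^ n * w = z" using lp lm unfolding w_def by simp
  have wd: "w \<le> \<delta>" using n d(1) lp z(1) unfolding w_def by (simp add: field_simps)
  have e1: "(g ^^ n) (a + w) = a + z"
    using iter_left[OF lm ga w0, of n] lw z ep by simp
  have e2: "c (a + w) = a + \<sigma> * w" using bspec[OF d(2), of "a + w"] w0 wd by simp
  have "\<sigma> * z \<le> 2 * (\<epsilon> / 2)" using s2 z sp unfolding \<sigma>_def by (intro mult_mono) auto
  then have sz: "\<sigma> * z \<le> \<epsilon>" by simp
  have w2: "0 \<le> \<sigma> * w" using sp w0 by simp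
  have q: "lm ^ n * (\<sigma> * w) = \<sigma> * z" using lw by (simp add: algebra_simps)
  have e3: "(g ^^ n) (a + \<sigma> * w) = a + \<sigma> * z"
    using iter_left[OF lm ga w2, of n] sz unfolding q by simp
  have "c x = c ((g ^^ n) (a + w))" using e1 unfolding z_def by simp
  also have "\<dots> = (g ^^ n) (c (a + w))" using C(6) by simp
  also have "\<dots> = a + \<sigma> * z" using e2 e3 by simp
  finally show ?thesis unfolding \<sigma>_def z_def .
qed

lemma claimR:
  assumes st: "stp K g a b" and ep: "\<epsilon> > 0" and mu: "0 < \<mu>" "\<mu> < 1"
    and gb: "\<forall>t\<in>{b-\<epsilon>..b}. g t = b - \<mu> * (b - t)"
    and c: "c \<in> CS K g a b"
  obtains \<tau> where "\<And>y. y \<in> {b-\<epsilon>..b} \<Longrightarrow> c y \<in> {b-\<epsilon>..b} \<Longrightarrow> c y = b - \<tau> * (b - y)"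
proof -
  note S = stpD[OF st]
  note C = CSD[OF st c]
  obtain \<eta> \<kappa> where e: "\<eta> > 0" "\<kappa> > 0" "\<forall>t\<in>{b-\<eta>..b}. c t = c b + \<kappa> * (t - b)"
    using PLo_LLA[OF C(2) _ S(5)] S(3,4) by auto
  have cz: "\<forall>t\<in>{b-\<eta>..b}. c t = b - \<kappa> * (b - t)" using e(3) C(5) by (auto simp: algebra_simps)
  have "c y = b - \<kappa> * (b - y)" if y: "y \<in> {b-\<epsilon>..b}" and cy: "c y \<in> {b-\<epsilon>..b}" for y
  proof -
    define z where "z = b - y"
    have z: "0 \<le> z" "z \<le> \<epsilon>" using y unfolding z_def by auto
    define z' where "z' = b - c y"
    have z': "0 \<le> z'" "z' \<le> \<epsilon>" using cy unfolding z'_def by auto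
    obtain m where m: "\<mu> ^ m < \<eta> / \<epsilon>" using real_arch_pow_inv[of "\<eta> / \<epsilon>" \<mu>] e(1) ep mu by auto
    have mp: "\<mu> ^ m > 0" using mu by simp
    have "\<mu> ^ m * z \<le> \<mu> ^ m * \<epsilon>" using z mp by (intro mult_left_mono) auto
    also have "\<dots> < \<eta>" using m ep by (simp add: field_simps)
    finally have mz: "\<mu> ^ m * z < \<eta>" .
    have 1: "(g ^^ m) y = b - \<mu> ^ m * z" using iter_right[OF mu gb z] unfolding z_def by simp
    have "0 \<le> \<mu> ^ m * z" using mp z by simp
    then have 2: "c ((g ^^ m) y) = b - \<kappa> * (\<mu> ^ m * z)" using bspec[OF cz, of "b - \<mu> ^ m * z"] mz 1 by simp
    have 3: "(g ^^ m) (c y) = b - \<mu> ^ m * z'" using iter_right[OF mu gb z'] unfolding z'_def by simp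
    have "c ((g ^^ m) y) = (g ^^ m) (c y)" using C(6) by simp
    then have "\<mu> ^ m * z' = \<mu> ^ m * (\<kappa> * z)" using 2 3 by (simp add: algebra_simps)
    then have "z' = \<kappa> * z" using mp mu(1) by simp
    then show ?thesis unfolding z_def z'_def by simp
  qed
  then show ?thesis using that by blast
qed

lemma claimI:
  assumes st: "stp K g a b" and c: "c \<in> CS K g a b" and s1: "sl a c = 1"
  shows "\<forall>t\<in>{a..b}. c t = t"
proof
  note S = stpD[OF st]
  note C = CSD[OF st c]
  obtain \<epsilon> lm where ep: "\<epsilon> > 0" "a + \<epsilon> < b" "lm > 1" "\<forall>t\<in>{a..a+\<epsilon>}. g t = a + lm * (t - a)"
    using near_a[OF st] by blast
  have small: "c x = x" if "x \<in> {a..a+\<epsilon>/2}" for x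
    using claimL[OF st ep c _ that] s1 by simp
  fix t assume t: "t \<in> {a..b}"
  show "c t = t"
  proof (cases "t \<le> a + \<epsilon> / 2")
    case True then show ?thesis using small t by auto
  next
    case False
    show ?thesis
    proof (cases "t = b")
      case True then show ?thesis using C(5) by simp
    next
      case False2: False
      have "a < t" "t < b" using t False False2 ep(1) by auto
      then obtain n s where ns: "a < s" "s \<le> a + \<epsilon> / 2" "(g ^^ n) s = t"
        using bwd_orbit[OF st, of t "a + \<epsilon> / 2"] ep(1) by auto
      have "c t = (g ^^ n) (c s)" using C(6) ns(3) by metis
      also have "\<dots> = t" using small[of s] ns by simp
      finally show ?thesis .
    qed
  qed
qed


lemma claimD:
  assumes st: "stp K g a b"
  shows "\<exists>\<delta>0>0. \<forall>c\<in>CS K g a b. \<bar>sl a c - 1\<bar> < \<delta>0 \<longrightarrow> sl a c = 1"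
proof -
  note S = stpD[OF st]
  obtain \<epsilon> lm where ep: "\<epsilon> > 0" "a + \<epsilon> < b" "lm > 1" "\<forall>t\<in>{a..a+\<epsilon>}. g t = a + lm * (t - a)"
    using near_a[OF st] by blast
  obtain \<epsilon>' \<mu> where eb: "\<epsilon>' > 0" "a < b - \<epsilon>'" "0 < \<mu>" "\<mu> < 1" "\<forall>t\<in>{b-\<epsilon>'..b}. g t = b - \<mu> * (b - t)"
    using near_b[OF st] by blast
  define p where "p = a + \<epsilon> / 4"
  have p: "a < p" "p < b" using ep unfolding p_def by auto
  obtain N where N: "b - \<epsilon>' \<le> (g ^^ N) p" using fwd_orbit[OF st p, of "b - \<epsilon>'"] eb(1) by auto
  define F where "F = g ^^ N"
  have FP: "F \<in> PLo" unfolding F_def using S(10) .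
  obtain \<eta>0 \<kappa> where F0: "\<eta>0 > 0" "\<kappa> > 0" "\<forall>t\<in>{p..p+\<eta>0}. F t = F p + \<kappa> * (t - p)"
    using PLo_RLA[OF FP, of p] p S(3,5) by auto
  define \<eta> where "\<eta> = min \<eta>0 (\<epsilon> / 8)"
  have eta: "\<eta> > 0" "\<eta> \<le> \<eta>0" "\<eta> \<le> \<epsilon> / 8" using F0(1) ep(1) unfolding \<eta>_def by auto
  have Faff: "\<forall>t\<in>{p..p+\<eta>}. F t = F p + \<kappa> * (t - p)"
  proof
    fix t assume "t \<in> {p..p+\<eta>}"
    then have "t \<in> {p..p+\<eta>0}" using eta(2) by auto
    then show "F t = F p + \<kappa> * (t - p)" using bspec[OF F0(3)] by blast
  qed
  have Fb: "F b = b" unfolding F_def using funpow_fix[of g b] S(7) by simp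
  have Frange: "F t \<in> {b-\<epsilon>'..b}" if "t \<in> {p..p+\<eta>}" for t
  proof -
    have "F p \<le> F t" using that PLo_le_iff[OF FP] by auto
    moreover have "t \<le> b" using that eta ep unfolding p_def by auto
    then have "F t \<le> F b" using PLo_le_iff[OF FP] by auto
    ultimately show ?thesis using N Fb unfolding F_def by auto
  qed
  define \<delta>0 where "\<delta>0 = \<eta> / (4 * (\<epsilon> / 4 + \<eta>))"
  have d0: "\<delta>0 > 0" using eta ep unfolding \<delta>0_def by auto
  have d0b: "\<delta>0 * (\<epsilon> / 4 + \<eta>) = \<eta> / 4" using eta ep unfolding \<delta>0_def by (simp add: field_simps)
  have d0le: "\<delta>0 \<le> 1" using eta ep unfolding \<delta>0_def by (simp add: field_simps)
  have "sl a c = 1" if c: "c \<in> CS K g a b" and cl: "\<bar>sl a c - 1\<bar> < \<delta>0" for c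
  proof -
    note C = CSD[OF st c]
    define \<sigma> where "\<sigma> = sl a c"
    have s2: "\<sigma> \<le> 2" using cl d0le unfolding \<sigma>_def by auto
    obtain \<tau> where tau: "\<And>y. y \<in> {b-\<epsilon>'..b} \<Longrightarrow> c y \<in> {b-\<epsilon>'..b} \<Longrightarrow> c y = b - \<tau> * (b - y)"
      using claimR[OF st eb(1,3,4,5) c] by blast
    have key: "F p + \<kappa> * (a + \<sigma> * (x - a) - p) = b - \<tau> * (b - (F p + \<kappa> * (x - p)))"
      if x: "x \<in> {p + \<eta>/4 .. p + \<eta>/2}" for x
    proof -
      have xa: "x \<in> {a..a+\<epsilon>/2}" using x eta ep unfolding p_def by auto
      have cx: "c x = a + \<sigma> * (x - a)" using claimL[OF st ep c _ xa] s2 unfolding \<sigma>_def by simp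
      have "\<bar>\<sigma> - 1\<bar> * (x - a) \<le> \<delta>0 * (\<epsilon> / 4 + \<eta>)"
        using cl x eta unfolding \<sigma>_def p_def by (intro mult_mono) auto
      then have "\<bar>(\<sigma> - 1) * (x - a)\<bar> \<le> \<eta> / 4" using d0b xa by (simp add: abs_mult)
      moreover have "c x - x = (\<sigma> - 1) * (x - a)" using cx by (simp add: algebra_simps)
      ultimately have "\<bar>c x - x\<bar> \<le> \<eta> / 4" by simp
      then have "c x - x \<le> \<eta> / 4" "-(c x - x) \<le> \<eta> / 4" by (simp_all only: abs_le_iff)
      then have cxJ: "c x \<in> {p..p+\<eta>}" using x eta by auto
      have xJ: "x \<in> {p..p+\<eta>}" using x eta by auto
      have "c (F x) = F (c x)" using C(6) unfolding F_def by simp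
      then have "F (c x) = b - \<tau> * (b - F x)" using tau[OF Frange[OF xJ]] Frange[OF cxJ] by simp
      moreover have "F (c x) = F p + \<kappa> * (c x - p)" using bspec[OF Faff cxJ] .
      moreover have "F x = F p + \<kappa> * (x - p)" using bspec[OF Faff xJ] .
      ultimately show ?thesis using cx by simp
    qed
    define x1 where "x1 = p + \<eta>/4"
    define x2 where "x2 = p + \<eta>/2"
    have e1: "F p + \<kappa> * (a + \<sigma> * (x1 - a) - p) = b - \<tau> * (b - (F p + \<kappa> * (x1 - p)))"
      using key[of x1] eta unfolding x1_def by auto
    have e2: "F p + \<kappa> * (a + \<sigma> * (x2 - a) - p) = b - \<tau> * (b - (F p + \<kappa> * (x2 - p)))"
      using key[of x2] eta unfolding x2_def by auto
    have "(\<sigma> - \<tau>) * (\<kappa> * (x2 - x1)) = 0" using e1 e2 by algebra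
    moreover have "\<kappa> * (x2 - x1) \<noteq> 0" using F0(2) eta unfolding x1_def x2_def by auto
    ultimately have st': "\<tau> = \<sigma>" by simp
    have "(\<sigma> - 1) * (b - F p + \<kappa> * (p - a)) = 0" using e1 unfolding st' by algebra
    moreover have "b - F p + \<kappa> * (p - a) > 0"
    proof -
      have "F p \<le> b" using Frange[of p] eta by auto
      moreover have "\<kappa> * (p - a) > 0" using F0(2) p by simp
      ultimately show ?thesis by linarith
    qed
    ultimately show ?thesis unfolding \<sigma>_def by simp
  qed
  then show ?thesis using d0 by blast
qed

lemma CS_comp_inv:
  assumes st: "stp K g a b" and c1: "c1 \<in> CS K g a b" and c2: "c2 \<in> CS K g a b"
  shows "finv c2 \<circ> c1 \<in> CS K g a b" "sl a (finv c2 \<circ> c1) = sl a c1 / sl a c2"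
proof -
  note S = stpD[OF st]
  note C1 = CSD[OF st c1]
  note C2 = CSD[OF st c2]
  have K: "finv c2 \<circ> c1 \<in> K" using S(1) C1(1) C2(1) unfolding pgrp_def by auto
  have ig: "finv c2 (g y) = g (finv c2 y)" for y
  proof -
    have "c2 (g (finv c2 y)) = g y" using C2(3) PLo_f_inv[OF C2(2)] by metis
    then show ?thesis using PLo_inv_f[OF C2(2)] by metis
  qed
  have ia: "finv c2 a = a" using PLo_inv_f[OF C2(2), of a] C2(4) by simp
  have ib: "finv c2 b = b" using PLo_inv_f[OF C2(2), of b] C2(5) by simp
  have comm: "(finv c2 \<circ> c1) \<circ> g = g \<circ> (finv c2 \<circ> c1)" using ig C1(3) by (auto simp: fun_eq_iff)
  show cs: "finv c2 \<circ> c1 \<in> CS K g a b" unfolding CS_def using K comm ia ib C1(4,5) by auto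
  obtain \<delta>1 where d1: "\<delta>1 > 0" "\<forall>t\<in>{a..a+\<delta>1}. c1 t = a + sl a c1 * (t - a)" and s1: "sl a c1 > 0"
    using sl_char[OF C1(2) C1(4) S(3)] S(4,5) by auto
  obtain \<delta>2 where d2: "\<delta>2 > 0" "\<forall>t\<in>{a..a+\<delta>2}. c2 t = a + sl a c2 * (t - a)" and s2: "sl a c2 > 0"
    using sl_char[OF C2(2) C2(4) S(3)] S(4,5) by auto
  define \<sigma>1 where "\<sigma>1 = sl a c1"
  define \<sigma>2 where "\<sigma>2 = sl a c2"
  define d where "d = min \<delta>1 (\<delta>2 * \<sigma>2 / \<sigma>1)"
  have dp: "d > 0" using d1 d2 s1 s2 unfolding d_def \<sigma>1_def \<sigma>2_def by auto
  have "(finv c2 \<circ> c1) t = a + (\<sigma>1 / \<sigma>2) * (t - a)" if t: "t \<in> {a..a+d}" for t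
  proof -
    have t1: "t \<in> {a..a+\<delta>1}" using t unfolding d_def by auto
    define u where "u = a + \<sigma>1 * (t - a) / \<sigma>2"
    have "\<sigma>1 * (t - a) \<le> \<sigma>1 * (\<delta>2 * \<sigma>2 / \<sigma>1)" using t s1 unfolding d_def \<sigma>1_def by (intro mult_left_mono) auto
    then have "\<sigma>1 * (t - a) \<le> \<delta>2 * \<sigma>2" using s1 unfolding \<sigma>1_def by simp
    then have "\<sigma>1 * (t - a) / \<sigma>2 \<le> \<delta>2" using s2 unfolding \<sigma>2_def by (simp add: field_simps)
    moreover have "0 \<le> \<sigma>1 * (t - a) / \<sigma>2" using t s1 s2 unfolding \<sigma>1_def \<sigma>2_def by simp
    ultimately have u: "u \<in> {a..a+\<delta>2}" unfolding u_def by auto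
    have "c2 u = a + \<sigma>2 * (\<sigma>1 * (t - a) / \<sigma>2)" using bspec[OF d2(2) u] unfolding u_def \<sigma>2_def by simp
    also have "\<dots> = c1 t" using bspec[OF d1(2) t1] s2 unfolding \<sigma>1_def \<sigma>2_def by simp
    finally have "finv c2 (c1 t) = u" using PLo_inv_f[OF C2(2), of u] by simp
    then show ?thesis unfolding u_def by simp
  qed
  then have "\<forall>t\<in>{a..a+d}. (finv c2 \<circ> c1) t = a + (\<sigma>1 / \<sigma>2) * (t - a)" by blast
  moreover have "finv c2 \<circ> c1 \<in> PLo" using CSD(2)[OF st cs] .
  moreover have "(finv c2 \<circ> c1) a = a" using ia C1(4) by simp
  ultimately show "sl a (finv c2 \<circ> c1) = sl a c1 / sl a c2"
    using sl_eq[of "finv c2 \<circ> c1" a d] dp S(3,4,5) unfolding \<sigma>1_def \<sigma>2_def by auto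
qed

lemma sep_countable:
  fixes A :: "real set"
  assumes "\<theta> > 0" "\<forall>x\<in>A. \<forall>y\<in>A. x \<noteq> y \<longrightarrow> \<theta> \<le> \<bar>x - y\<bar>"
  shows "countable A"
proof -
  have inj: "inj_on (\<lambda>x. \<lfloor>x / \<theta>\<rfloor>) A"
  proof (rule inj_onI)
    fix x y assume xy: "x \<in> A" "y \<in> A" "\<lfloor>x / \<theta>\<rfloor> = \<lfloor>y / \<theta>\<rfloor>"
    have "\<bar>x / \<theta> - y / \<theta>\<bar> < 1" using xy(3) by linarith
    then have "\<bar>x - y\<bar> / \<theta> < 1" using assms(1) by (simp add: diff_divide_distrib[symmetric])
    then have "\<bar>x - y\<bar> < \<theta>" using assms(1) by (simp add: field_simps)
    then show "x = y" using assms(2) xy(1,2) by force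
  qed
  have "countable ((\<lambda>x. \<lfloor>x / \<theta>\<rfloor>) ` A)" by (rule countable_subset[OF subset_UNIV]) simp
  then show ?thesis using countable_image_inj_on inj by blast
qed

lemma L1:
  assumes st: "stp K g a b"
  shows "countable (rho a b ` CS K g a b)"
proof -
  note S = stpD[OF st]
  obtain \<delta>0 where d0: "\<delta>0 > 0" "\<forall>c\<in>CS K g a b. \<bar>sl a c - 1\<bar> < \<delta>0 \<longrightarrow> sl a c = 1"
    using claimD[OF st] by blast
  define \<theta> where "\<theta> = ln (1 + \<delta>0)"
  have th: "\<theta> > 0" using d0 unfolding \<theta>_def by simp
  have slp: "sl a c > 0" if "c \<in> CS K g a b" for c
    using sl_char[OF CSD(2,4)[OF st that] S(3)] S(4,5) by auto
  define h where "h c = ln (sl a c)" for c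
  have same: "sl a c1 = sl a c2" if c: "c1 \<in> CS K g a b" "c2 \<in> CS K g a b" and lt: "\<bar>h c1 - h c2\<bar> < \<theta>" for c1 c2
  proof -
    define r where "r = sl a c1 / sl a c2"
    have p1: "sl a c1 > 0" "sl a c2 > 0" using slp c by auto
    have rp: "r > 0" using p1 unfolding r_def by auto
    have lr: "ln r = h c1 - h c2" using p1 unfolding r_def h_def by (simp add: ln_div)
    have "ln r < ln (1 + \<delta>0)" using lr lt unfolding \<theta>_def by auto
    then have r1: "r < 1 + \<delta>0" using rp d0(1) by simp
    have "- ln (1 + \<delta>0) < ln r" using lr lt unfolding \<theta>_def by auto
    then have "ln (inverse (1 + \<delta>0)) < ln r" using d0(1) by (simp add: ln_inverse)
    then have "inverse (1 + \<delta>0) < r" using rp d0(1) by simp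
    moreover have "1 - \<delta>0 < inverse (1 + \<delta>0)"
    proof -
      have "(1 - \<delta>0) * (1 + \<delta>0) < 1" using d0(1) by (simp add: algebra_simps)
      then show ?thesis using d0(1) by (simp add: field_simps)
    qed
    ultimately have "\<bar>r - 1\<bar> < \<delta>0" using r1 by auto
    then have "sl a (finv c2 \<circ> c1) = 1" using d0(2) CS_comp_inv[OF st c(1,2)] unfolding r_def by auto
    then have "r = 1" using CS_comp_inv[OF st c(1,2)] unfolding r_def by simp
    then show ?thesis using slp c unfolding r_def by simp
  qed
  have rho_eq: "rho a b c1 = rho a b c2" if c: "c1 \<in> CS K g a b" "c2 \<in> CS K g a b" and e: "h c1 = h c2" for c1 c2
  proof -
    have "\<bar>h c1 - h c2\<bar> < \<theta>" using e th by simp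
    then have "sl a c1 = sl a c2" using same[OF c] by blast
    moreover have "sl a c2 > 0" using slp c(2) by blast
    ultimately have "sl a (finv c2 \<circ> c1) = 1" using CS_comp_inv(2)[OF st c] by simp
    then have fx: "\<forall>t\<in>{a..b}. (finv c2 \<circ> c1) t = t" using claimI[OF st CS_comp_inv(1)[OF st c]] by blast
    have "c1 t = c2 t" if "t \<in> {a..b}" for t
    proof -
      have "finv c2 (c1 t) = t" using fx that by simp
      then have "c2 (finv c2 (c1 t)) = c2 t" by simp
      then show ?thesis using PLo_f_inv[OF CSD(2)[OF st c(2)]] by simp
    qed
    then show ?thesis unfolding rho_def by (auto simp: fun_eq_iff)
  qed
  have sep: "\<forall>x\<in>h ` CS K g a b. \<forall>y\<in>h ` CS K g a b. x \<noteq> y \<longrightarrow> \<theta> \<le> \<bar>x - y\<bar>"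
  proof (intro ballI impI)
    fix x y assume "x \<in> h ` CS K g a b" "y \<in> h ` CS K g a b" "x \<noteq> y"
    then obtain c1 c2 where c: "c1 \<in> CS K g a b" "c2 \<in> CS K g a b" "x = h c1" "y = h c2" by auto
    show "\<theta> \<le> \<bar>x - y\<bar>"
    proof (rule ccontr)
      assume "\<not> \<theta> \<le> \<bar>x - y\<bar>"
      then have "sl a c1 = sl a c2" using same[OF c(1,2)] c by simp
      then show False using \<open>x \<noteq> y\<close> c unfolding h_def by simp
    qed
  qed
  have cA: "countable (h ` CS K g a b)" using sep_countable[OF th sep] .
  define R where "R v = rho a b (SOME c. c \<in> CS K g a b \<and> h c = v)" for v
  have "rho a b ` CS K g a b \<subseteq> R ` h ` CS K g a b"
  proof
    fix r assume "r \<in> rho a b ` CS K g a b"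
    then obtain c where c: "c \<in> CS K g a b" "r = rho a b c" by auto
    have ex: "\<exists>c'. c' \<in> CS K g a b \<and> h c' = h c" using c by blast
    define c' where "c' = (SOME c'. c' \<in> CS K g a b \<and> h c' = h c)"
    have c': "c' \<in> CS K g a b \<and> h c' = h c" using someI_ex[OF ex] unfolding c'_def .
    then have "R (h c) = rho a b c" unfolding R_def c'_def[symmetric] using rho_eq[OF _ c(1)] by auto
    moreover have "h c \<in> h ` CS K g a b" using c(1) by blast
    ultimately show "r \<in> R ` h ` CS K g a b" using c(2) by (metis imageI)
  qed
  then show ?thesis using cA by (meson countable_image countable_subset)
qed

definition orbs :: "(real \<Rightarrow> real) \<Rightarrow> (real \<times> real) set" where
  "orbs f = {(p, q). p < q \<and> f p = p \<and> f q = q \<and> (\<forall>t. p < t \<and> t < q \<longrightarrow> f t \<noteq> t)}"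

definition lends :: "real set \<Rightarrow> real set" where
  "lends Z = {p. p \<in> Z \<and> (\<exists>q>p. \<forall>t. p < t \<and> t < q \<longrightarrow> t \<notin> Z)}"

definition rends :: "real set \<Rightarrow> real set" where
  "rends Z = {q. q \<in> Z \<and> (\<exists>p<q. \<forall>t. p < t \<and> t < q \<longrightarrow> t \<notin> Z)}"

lemma lends_countable: "countable (lends Z)"
proof -
  define P where "P p r \<longleftrightarrow> r \<in> \<rat> \<and> p < r \<and> (\<forall>t. p < t \<and> t \<le> r \<longrightarrow> t \<notin> Z)" for p r
  have ex: "\<exists>r. P p r" if pl: "p \<in> lends Z" for p
  proof -
    obtain q where q: "q > p" "\<forall>t. p < t \<and> t < q \<longrightarrow> t \<notin> Z" using pl unfolding lends_def mem_Collect_eq by blast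
    obtain r where r: "r \<in> \<rat>" "p < r" "r < q" using Rats_dense_in_real[OF q(1)] by auto
    then show ?thesis using q(2) unfolding P_def by (intro exI[where x=r]) auto
  qed
  define f where "f p = (SOME r. P p r)" for p
  have fP: "P p (f p)" if "p \<in> lends Z" for p using someI_ex[OF ex[OF that]] unfolding f_def .
  have inj: "inj_on f (lends Z)"
  proof (rule inj_onI)
    fix p p' assume pp: "p \<in> lends Z" "p' \<in> lends Z" "f p = f p'"
    show "p = p'"
    proof (rule ccontr)
      assume "p \<noteq> p'"
      then consider "p < p'" | "p' < p" by linarith
      then show False
      proof cases
        case 1
        have "p' < f p'" using fP[OF pp(2)] unfolding P_def by auto
        then have "p < p' \<and> p' \<le> f p" using 1 pp(3) by auto
        moreover have "p' \<in> Z" using pp(2) unfolding lends_def by auto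
        ultimately show False using fP[OF pp(1)] unfolding P_def by auto
      next
        case 2
        have "p < f p" using fP[OF pp(1)] unfolding P_def by auto
        then have "p' < p \<and> p \<le> f p'" using 2 pp(3) by auto
        moreover have "p \<in> Z" using pp(1) unfolding lends_def by auto
        ultimately show False using fP[OF pp(2)] unfolding P_def by auto
      qed
    qed
  qed
  have "f ` lends Z \<subseteq> \<rat>" using fP unfolding P_def by auto
  then have "countable (f ` lends Z)" using countable_rat countable_subset by blast
  then show ?thesis using countable_image_inj_on inj by blast
qed

lemma rends_countable: "countable (rends Z)"
proof -
  define P where "P q r \<longleftrightarrow> r \<in> \<rat> \<and> r < q \<and> (\<forall>t. r \<le> t \<and> t < q \<longrightarrow> t \<notin> Z)" for q r
  have ex: "\<exists>r. P q r" if ql: "q \<in> rends Z" for q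
  proof -
    obtain p where p: "p < q" "\<forall>t. p < t \<and> t < q \<longrightarrow> t \<notin> Z" using ql unfolding rends_def mem_Collect_eq by blast
    obtain r where r: "r \<in> \<rat>" "p < r" "r < q" using Rats_dense_in_real[OF p(1)] by auto
    then show ?thesis using p(2) unfolding P_def by (intro exI[where x=r]) auto
  qed
  define f where "f p = (SOME r. P p r)" for p
  have fP: "P p (f p)" if "p \<in> rends Z" for p using someI_ex[OF ex[OF that]] unfolding f_def .
  have inj: "inj_on f (rends Z)"
  proof (rule inj_onI)
    fix p p' assume pp: "p \<in> rends Z" "p' \<in> rends Z" "f p = f p'"
    show "p = p'"
    proof (rule ccontr)
      assume "p \<noteq> p'"
      then consider "p < p'" | "p' < p" by linarith
      then show False
      proof cases
        case 1
        have "f p < p" using fP[OF pp(1)] unfolding P_def by auto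
        then have "f p' \<le> p \<and> p < p'" using 1 pp(3) by auto
        moreover have "p \<in> Z" using pp(1) unfolding rends_def by auto
        ultimately show False using fP[OF pp(2)] unfolding P_def by auto
      next
        case 2
        have "f p' < p'" using fP[OF pp(2)] unfolding P_def by auto
        then have "f p \<le> p' \<and> p' < p" using 2 pp(3) by auto
        moreover have "p' \<in> Z" using pp(2) unfolding rends_def by auto
        ultimately show False using fP[OF pp(1)] unfolding P_def by auto
      qed
    qed
  qed
  have "f ` rends Z \<subseteq> \<rat>" using fP unfolding P_def by auto
  then have "countable (f ` rends Z)" using countable_rat countable_subset by blast
  then show ?thesis using countable_image_inj_on inj by blast
qed

lemma orbs_01:
  assumes "f \<in> PLo" "(p, q) \<in> orbs f"
  shows "0 \<le> p" "q \<le> 1"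
proof -
  have o: "p < q" "\<And>t. p < t \<Longrightarrow> t < q \<Longrightarrow> f t \<noteq> t" using assms(2) unfolding orbs_def by auto
  show "0 \<le> p"
  proof (rule ccontr)
    assume "\<not> 0 \<le> p"
    define t where "t = (p + min q 0) / 2"
    have "p < t" "t < q" "t < 0" using o(1) \<open>\<not> 0 \<le> p\<close> unfolding t_def by (auto simp: min_def)
    then show False using o(2) PLo_out[OF assms(1), of t] by auto
  qed
  show "q \<le> 1"
  proof (rule ccontr)
    assume "\<not> q \<le> 1"
    define t where "t = (q + max p 1) / 2"
    have "p < t" "t < q" "t > 1" using o(1) \<open>\<not> q \<le> 1\<close> unfolding t_def by (auto simp: max_def)
    then show False using o(2) PLo_out[OF assms(1), of t] by auto
  qed
qed

lemma orbs_cover: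
  assumes f: "f \<in> PLo" and t: "f t \<noteq> t"
  shows "\<exists>(p, q)\<in>orbs f. p < t \<and> t < q"
proof -
  have t01: "t \<in> {0..1}" using t PLo_out[OF f] by auto
  have cd: "continuous_on {0..1} (\<lambda>x. f x - x)"
    using PLo_cont[OF f] by (intro continuous_intros) auto
  define A where "A = {x \<in> {0..t}. f x - x = 0}"
  define B where "B = {x \<in> {t..1}. f x - x = 0}"
  have c1: "continuous_on {0..t} (\<lambda>x. f x - x)" by (rule continuous_on_subset[OF cd]) (use t01 in auto)
  have c2: "continuous_on {t..1} (\<lambda>x. f x - x)" by (rule continuous_on_subset[OF cd]) (use t01 in auto)
  have cA: "closed A" unfolding A_def
    by (rule continuous_closed_preimage_constant[OF c1]) auto
  have cB: "closed B" unfolding B_def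
    by (rule continuous_closed_preimage_constant[OF c2]) auto
  have "bounded A" unfolding A_def by (rule bounded_subset[OF bounded_closed_interval[of 0 t]]) auto
  then have kA: "compact A" using cA by (simp add: compact_eq_bounded_closed)
  have "bounded B" unfolding B_def by (rule bounded_subset[OF bounded_closed_interval[of t 1]]) auto
  then have kB: "compact B" using cB by (simp add: compact_eq_bounded_closed)
  have "0 \<in> A" using PLo_0[OF f] t01 unfolding A_def by auto
  then obtain p where p: "p \<in> A" "\<forall>s\<in>A. s \<le> p" using compact_attains_sup[OF kA] by blast
  have "1 \<in> B" using PLo_1[OF f] t01 unfolding B_def by auto
  then obtain q where q: "q \<in> B" "\<forall>s\<in>B. q \<le> s" using compact_attains_inf[OF kB] by blast
  have pt: "p < t" using p(1) t unfolding A_def by (cases "p = t") auto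
  have tq: "t < q" using q(1) t unfolding B_def by (cases "q = t") auto
  have "(p, q) \<in> orbs f"
    unfolding orbs_def
  proof (simp only: mem_Collect_eq case_prod_conv, intro conjI allI impI notI)
    show "p < q" using pt tq by simp
    show "f p = p" using p(1) unfolding A_def by simp
    show "f q = q" using q(1) unfolding B_def by simp
    fix s assume s0: "p < s \<and> s < q" "f s = s"
    then have s: "p < s" "s < q" "f s = s" by auto
    show False
    proof (cases "s \<le> t")
      case True
      then have "s \<in> A" using s pt p(1) unfolding A_def by auto
      then show False using p(2) s(1) by auto
    next
      case False
      then have "s \<in> B" using s tq q(1) unfolding B_def by auto
      then show False using q(2) s(2) by auto
    qed
  qed
  then show ?thesis using pt tq by blast
qed

lemma orbs_unique:
  assumes "(p, q) \<in> orbs f" "(p, q') \<in> orbs f" shows "q = q'"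
proof -
  have a: "p < q" "f q = q" "\<And>t. p < t \<Longrightarrow> t < q \<Longrightarrow> f t \<noteq> t" using assms(1) unfolding orbs_def by auto
  have b: "p < q'" "f q' = q'" "\<And>t. p < t \<Longrightarrow> t < q' \<Longrightarrow> f t \<noteq> t" using assms(2) unfolding orbs_def by auto
  show ?thesis
  proof (rule ccontr)
    assume "q \<noteq> q'"
    then consider "q < q'" | "q' < q" by linarith
    then show False
    proof cases
      case 1 then show False using b(3)[of q] a(1,2) by simp
    next
      case 2 then show False using a(3)[of q'] b(1,2) by simp
    qed
  qed
qed

lemma orbs_finite:
  assumes f: "f \<in> PLo"
  shows "finite (orbs f)"
proof -
  obtain xs where xs: "length xs \<ge> 2" "sorted_wrt (<) xs" "xs ! 0 = 0" "last xs = 1"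
    "\<And>i. Suc i < length xs \<Longrightarrow> \<exists>a b. \<forall>x\<in>{xs ! i .. xs ! Suc i}. f x = a * x + b"
    using PL_pieces[OF f] by blast
  define F where "F i = {s. xs ! i < s \<and> s < xs ! Suc i \<and> f s = s \<and> (\<exists>t. xs ! i < t \<and> t < xs ! Suc i \<and> f t \<noteq> t)}" for i
  have Ffin: "finite (F i)" if i: "Suc i < length xs" for i
  proof (cases "F i = {}")
    case False
    then obtain s where s: "s \<in> F i" by auto
    obtain a b where ab: "\<forall>x\<in>{xs ! i .. xs ! Suc i}. f x = a * x + b" using xs(5)[OF i] by blast
    have "F i \<subseteq> {s}"
    proof
      fix s' assume s': "s' \<in> F i"
      show "s' \<in> {s}"
      proof (rule ccontr)
        assume "s' \<notin> {s}"
        then have ne: "s' \<noteq> s" by simp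
        have e1: "a * s + b = s" using s ab unfolding F_def by auto
        have e2: "a * s' + b = s'" using s' ab unfolding F_def by auto
        have "(a - 1) * (s' - s) = 0" using e1 e2 by (simp add: algebra_simps)
        then have a1: "a = 1" using ne by simp
        then have b0: "b = 0" using e1 by simp
        obtain t where "xs ! i < t" "t < xs ! Suc i" "f t \<noteq> t" using s unfolding F_def by auto
        then show False using ab a1 b0 by auto
      qed
    qed
    then show ?thesis using finite_subset by blast
  qed simp
  have sub: "fst ` orbs f \<subseteq> set xs \<union> (\<Union>i\<in>{i. Suc i < length xs}. F i)"
  proof
    fix p assume "p \<in> fst ` orbs f"
    then obtain q where pq: "(p, q) \<in> orbs f" by auto
    have o: "p < q" "f p = p" "\<And>t. p < t \<Longrightarrow> t < q \<Longrightarrow> f t \<noteq> t" using pq unfolding orbs_def by auto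
    have p01: "0 \<le> p" "q \<le> 1" using orbs_01[OF f pq] by auto
    show "p \<in> set xs \<union> (\<Union>i\<in>{i. Suc i < length xs}. F i)"
    proof (cases "p \<in> set xs")
      case False
      obtain i where i: "Suc i < length xs" "xs ! i \<le> p" "p < xs ! Suc i"
        using sorted_find_piece[OF xs(2,1)] xs(3,4) p01 o(1) by fastforce
      have "xs ! i \<noteq> p" using False i(1) by (metis Suc_lessD nth_mem)
      then have i2: "xs ! i < p" using i(2) by simp
      define t where "t = (p + min q (xs ! Suc i)) / 2"
      have t: "p < t" "t < q" "t < xs ! Suc i" using o(1) i(3) unfolding t_def by (auto simp: min_def)
      have "xs ! i < t" using i2 t(1) by linarith
      then have "p \<in> F i" unfolding F_def using i2 i(3) o(2) t o(3)[of t] by blast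
      then show ?thesis using i(1) by blast
    qed simp
  qed
  have fi: "finite {i. Suc i < length xs}" by (rule finite_subset[of _ "{..<length xs}"]) auto
  have "finite (set xs \<union> (\<Union>i\<in>{i. Suc i < length xs}. F i))" using Ffin fi by auto
  then have "finite (fst ` orbs f)" using sub finite_subset by blast
  moreover have "inj_on fst (orbs f)"
  proof (rule inj_onI)
    fix x y assume xy: "x \<in> orbs f" "y \<in> orbs f" "fst x = fst y"
    obtain p q where x: "x = (p, q)" by (cases x)
    obtain p' q' where y: "y = (p', q')" by (cases y)
    have "p = p'" using xy(3) x y by simp
    then have "q = q'" using orbs_unique[of p q f q'] xy(1,2) x y by simp
    then show "x = y" using x y \<open>p = p'\<close> by simp
  qed
  ultimately show ?thesis using finite_imageD by blast
qed

lemma orbit_dir: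
  assumes g: "g \<in> PLo" and ab: "(a, b) \<in> orbs g"
  shows "(\<forall>t. a < t \<and> t < b \<longrightarrow> t < g t) \<or> (\<forall>t. a < t \<and> t < b \<longrightarrow> g t < t)"
proof (rule ccontr)
  have o: "a < b" "\<And>t. a < t \<Longrightarrow> t < b \<Longrightarrow> g t \<noteq> t" using ab unfolding orbs_def by auto
  have a01: "0 \<le> a" "b \<le> 1" using orbs_01[OF g ab] by auto
  assume "\<not> ?thesis"
  then obtain s u where su: "a < s" "s < b" "g s < s" "a < u" "u < b" "u < g u"
    using o(2) by (metis linorder_neqE_linordered_idom)
  define \<phi> where "\<phi> t = g t - t" for t
  have cd: "continuous_on {0..1} \<phi>" unfolding \<phi>_def using PLo_cont[OF g] by (intro continuous_intros) auto
  have "\<exists>x. min s u \<le> x \<and> x \<le> max s u \<and> \<phi> x = 0"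
  proof (cases "s \<le> u")
    case True
    have c: "continuous_on {s..u} \<phi>" by (rule continuous_on_subset[OF cd]) (use su a01 in auto)
    have "\<exists>x\<ge>s. x \<le> u \<and> \<phi> x = 0" using IVT'[of \<phi> s 0 u] c True su unfolding \<phi>_def by auto
    then show ?thesis using True by auto
  next
    case False
    have c: "continuous_on {u..s} \<phi>" by (rule continuous_on_subset[OF cd]) (use su a01 in auto)
    have "\<exists>x\<ge>u. x \<le> s \<and> \<phi> x = 0" using IVT2'[of \<phi> s 0 u] c False su unfolding \<phi>_def by auto
    then show ?thesis using False by auto
  qed
  then obtain x where x: "min s u \<le> x" "x \<le> max s u" "g x = x" unfolding \<phi>_def by auto
  have "a < x" "x < b" using x(1,2) su by auto
  then show False using o(2) x(3) by auto
qed

lemma KEY: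
  assumes pg: "pgrp K" and D: "countable D" and comm: "\<forall>x\<in>K. \<forall>y\<in>K. x \<circ> y \<circ> finv x \<circ> finv y \<in> D"
    and g: "g \<in> K" and ab: "(a, b) \<in> orbs g"
  shows "countable (rho a b ` K)"
proof -
  have KP: "\<And>x. x \<in> K \<Longrightarrow> x \<in> PLo" using pg unfolding pgrp_def by auto
  have Kc: "\<And>x y. x \<in> K \<Longrightarrow> y \<in> K \<Longrightarrow> x \<circ> y \<in> K" using pg unfolding pgrp_def by auto
  have Ki: "\<And>x. x \<in> K \<Longrightarrow> finv x \<in> K" using pg unfolding pgrp_def by auto
  have gP: "g \<in> PLo" using KP g by auto
  have o: "a < b" "g a = a" "g b = b" "\<And>t. a < t \<Longrightarrow> t < b \<Longrightarrow> g t \<noteq> t" using ab unfolding orbs_def by auto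
  have a01: "0 \<le> a" "b \<le> 1" using orbs_01[OF gP ab] by auto
  obtain g' where g'K: "g' \<in> K" and st: "stp K g' a b"
  proof (cases "\<forall>t. a < t \<and> t < b \<longrightarrow> t < g t")
    case True
    then have "stp K g a b" unfolding stp_def using pg g o a01 by auto
    then show ?thesis using that g by blast
  next
    case False
    then have dec: "\<forall>t. a < t \<and> t < b \<longrightarrow> g t < t" using orbit_dir[OF gP ab] by blast
    have ia: "finv g a = a" using PLo_inv_f[OF gP, of a] o(2) by simp
    have ib: "finv g b = b" using PLo_inv_f[OF gP, of b] o(3) by simp
    have inc: "t < finv g t" if "a < t" "t < b" for t
    proof (rule ccontr)
      assume "\<not> t < finv g t"
      then have "g (finv g t) \<le> g t" using PLo_le_iff[OF gP] by simp
      then have "t \<le> g t" using PLo_f_inv[OF gP] by simp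
      then show False using dec that by auto
    qed
    have "stp K (finv g) a b" unfolding stp_def using pg Ki[OF g] ia ib inc o(1) a01 by auto
    then show ?thesis using that Ki[OF g] by blast
  qed
  note S = stpD[OF st]
  have g'P: "g' \<in> PLo" using S(9) .
  define kx where "kx x = x \<circ> g' \<circ> finv x" for x
  define KD where "KD = (\<lambda>d. d \<circ> g') ` D"
  have cKD: "countable KD" unfolding KD_def using D by simp
  have kxKD: "kx x \<in> KD" if x: "x \<in> K" for x
  proof -
    define d where "d = x \<circ> g' \<circ> finv x \<circ> finv g'"
    have "d \<in> D" using comm x g'K unfolding d_def by blast
    moreover have "d \<circ> g' = kx x" unfolding d_def kx_def using PLo_inv_f[OF g'P] by (auto simp: fun_eq_iff)
    ultimately show ?thesis unfolding KD_def by (metis imageI)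
  qed
  have xa_l: "x a \<in> lends {t. kx x t = t}" if x: "x \<in> K" for x
  proof -
    have xP: "x \<in> PLo" using KP x .
    have "kx x (x a) = x a" unfolding kx_def using PLo_inv_f[OF xP] S(6) by simp
    moreover have "x a < x b" using PLo_less[OF xP o(1)] .
    moreover have "kx x t \<noteq> t" if t: "x a < t" "t < x b" for t
    proof -
      define s where "s = finv x t"
      have xs: "x s = t" unfolding s_def using PLo_f_inv[OF xP] by simp
      have "a < s" "s < b" using t xs PLo_less_iff[OF xP] by metis+
      then have "g' s \<noteq> s" using S(8) by (metis less_irrefl)
      then have "x (g' s) \<noteq> x s" using PLo_eq_iff[OF xP] by simp
      moreover have "kx x t = x (g' s)" unfolding kx_def s_def by simp
      ultimately show ?thesis using xs by simp
    qed
    ultimately show ?thesis unfolding lends_def by auto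
  qed
  define V where "V = Sigma KD (\<lambda>k. lends {t. k t = t})"
  have cV: "countable V" unfolding V_def using cKD lends_countable by (intro countable_SIGMA) auto
  define rep where "rep v = (SOME x. x \<in> K \<and> (kx x, x a) = v)" for v
  define \<Phi> :: "(real \<Rightarrow> real) \<Rightarrow> (real \<Rightarrow> real) \<Rightarrow> real \<Rightarrow> real" where "\<Phi> x0 r = (\<lambda>t. if a \<le> t \<and> t \<le> b then x0 (r t) else t)" for x0 r
  have sub: "rho a b ` K \<subseteq> (\<Union>v\<in>V. \<Phi> (rep v) ` (rho a b ` CS K g' a b))"
  proof
    fix r assume "r \<in> rho a b ` K"
    then obtain x where x: "x \<in> K" "r = rho a b x" by auto
    have xP: "x \<in> PLo" using KP x(1) .
    define v where "v = (kx x, x a)"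
    have vV: "v \<in> V" unfolding V_def v_def using kxKD[OF x(1)] xa_l[OF x(1)] by auto
    have ex: "\<exists>x'. x' \<in> K \<and> (kx x', x' a) = v" using x(1) unfolding v_def by blast
    define x0 where "x0 = rep v"
    have x0: "x0 \<in> K" "kx x0 = kx x" "x0 a = x a"
      using someI_ex[OF ex] unfolding x0_def rep_def v_def by auto
    have x0P: "x0 \<in> PLo" using KP x0(1) .
    define c where "c = finv x0 \<circ> x"
    have cK: "c \<in> K" unfolding c_def using Kc Ki x0(1) x(1) by blast
    have cP: "c \<in> PLo" using KP cK .
    have kk: "x0 (g' (finv x0 y)) = x (g' (finv x y))" for y
      using fun_cong[OF x0(2), of y] unfolding kx_def by simp
    have cg: "c (g' t) = g' (c t)" for t
    proof -
      have "x0 (g' (finv x0 (x t))) = x (g' t)" using kk[of "x t"] PLo_inv_f[OF xP] by simp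
      then have "finv x0 (x0 (g' (finv x0 (x t)))) = finv x0 (x (g' t))" by simp
      then show ?thesis unfolding c_def using PLo_inv_f[OF x0P] by simp
    qed
    have ca: "c a = a" unfolding c_def using x0(3) PLo_inv_f[OF x0P] by (metis comp_apply)
    have cb: "c b = b"
    proof (rule ccontr)
      assume ne: "c b \<noteq> b"
      have fixcb: "g' (c b) = c b" using cg[of b] S(7) by simp
      have "a < c b" using PLo_less[OF cP o(1)] ca by simp
      show False
      proof (cases "c b < b")
        case True then show False using S(8)[of "c b"] fixcb \<open>a < c b\<close> by simp
      next
        case False
        then have gt: "b < c b" using ne by simp
        define s where "s = finv c b"
        have cs: "c s = b" unfolding s_def using PLo_f_inv[OF cP] by simp
        have "c a < c s" using ca cs o(1) by simp
        then have as: "a < s" using PLo_less_iff[OF cP] by blast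
        have "c s < c b" using cs gt by simp
        then have sb: "s < b" using PLo_less_iff[OF cP] by blast
        have "c (g' s) = c s" using cg[of s] cs S(7) by simp
        then have "g' s = s" using PLo_eq_iff[OF cP] by blast
        then show False using S(8)[OF as sb] by simp
      qed
    qed
    have cCS: "c \<in> CS K g' a b" unfolding CS_def using cK cg ca cb by (auto simp: fun_eq_iff)
    have "r = \<Phi> x0 (rho a b c)"
      unfolding x(2) \<Phi>_def rho_def c_def using PLo_f_inv[OF x0P] by (auto simp: fun_eq_iff)
    then show "r \<in> (\<Union>v\<in>V. \<Phi> (rep v) ` (rho a b ` CS K g' a b))"
      using vV cCS unfolding x0_def by blast
  qed
  have "countable (\<Union>v\<in>V. \<Phi> (rep v) ` (rho a b ` CS K g' a b))"
    using cV L1[OF st] by (intro countable_UN) auto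
  then show ?thesis using sub countable_subset by blast
qed


lemma STEP:
  assumes pg: "pgrp K" and D: "countable D" and comm: "\<forall>x\<in>K. \<forall>y\<in>K. x \<circ> y \<circ> finv x \<circ> finv y \<in> D"
  shows "countable K"
proof -
  have KP: "\<And>x. x \<in> K \<Longrightarrow> x \<in> PLo" using pg unfolding pgrp_def by auto
  define Ob where "Ob = (\<Union>x\<in>K. orbs x)"
  have cR: "countable (rho a b ` K)" if ab: "(a, b) \<in> Ob" for a b
  proof -
    obtain x where "x \<in> K" "(a, b) \<in> orbs x" using ab unfolding Ob_def by blast
    then show ?thesis by (rule KEY[OF pg D comm])
  qed
  define I :: "real \<times> real \<Rightarrow> real set" where "I pq = {fst pq<..<snd pq}" for pq
  define U where "U = \<Union>(I ` Ob)"
  have op: "\<And>S. S \<in> I ` Ob \<Longrightarrow> open S" unfolding I_def by auto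
  obtain F' where F': "F' \<subseteq> I ` Ob" "countable F'" "\<Union>F' = \<Union>(I ` Ob)"
    by (rule Lindelof[OF op]) blast
  define O0 where "O0 = (\<lambda>J. SOME pq. pq \<in> Ob \<and> I pq = J) ` F'"
  have cO0: "countable O0" unfolding O0_def using F'(2) by simp
  have O0O: "O0 \<subseteq> Ob"
  proof
    fix pq assume "pq \<in> O0"
    then obtain J where J: "J \<in> F'" "pq = (SOME pq. pq \<in> Ob \<and> I pq = J)" unfolding O0_def by auto
    have "\<exists>pq. pq \<in> Ob \<and> I pq = J" using J(1) F'(1) by blast
    then show "pq \<in> Ob" using someI_ex J(2) by (metis (mono_tags, lifting))
  qed
  have U0: "U = (\<Union>pq\<in>O0. I pq)"
  proof
    show "(\<Union>pq\<in>O0. I pq) \<subseteq> U" using O0O unfolding U_def by auto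
    show "U \<subseteq> (\<Union>pq\<in>O0. I pq)"
    proof
      fix t assume "t \<in> U"
      then obtain J where J: "J \<in> F'" "t \<in> J" using F'(3) unfolding U_def by auto
      have ex: "\<exists>pq. pq \<in> Ob \<and> I pq = J" using J(1) F'(1) by blast
      define pq where "pq = (SOME pq. pq \<in> Ob \<and> I pq = J)"
      have "I pq = J" using someI_ex[OF ex] unfolding pq_def by auto
      moreover have "pq \<in> O0" unfolding O0_def pq_def using J(1) by blast
      ultimately show "t \<in> (\<Union>pq\<in>O0. I pq)" using J(2) by blast
    qed
  qed
  define PL where "PL = (\<Union>(a, b)\<in>O0. \<Union>r\<in>rho a b ` K. lends {t. r t = t}) \<union> lends (- U)"
  define PR where "PR = (\<Union>(a, b)\<in>O0. \<Union>r\<in>rho a b ` K. rends {t. r t = t}) \<union> rends (- U)"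
  have cRL: "countable (\<Union>r\<in>rho a b ` K. lends {t. r t = t})" if "(a, b) \<in> O0" for a b
  proof (rule countable_UN)
    show "countable (rho a b ` K)" using cR O0O that by blast
  qed (rule lends_countable)
  have cRR: "countable (\<Union>r\<in>rho a b ` K. rends {t. r t = t})" if "(a, b) \<in> O0" for a b
  proof (rule countable_UN)
    show "countable (rho a b ` K)" using cR O0O that by blast
  qed (rule rends_countable)
  have cPL: "countable PL" unfolding PL_def
  proof (rule countable_Un)
    show "countable (\<Union>(a, b)\<in>O0. \<Union>r\<in>rho a b ` K. lends {t. r t = t})"
      using cO0 cRL by (intro countable_UN) auto
  qed (rule lends_countable)
  have cPR: "countable PR" unfolding PR_def
  proof (rule countable_Un)
    show "countable (\<Union>(a, b)\<in>O0. \<Union>r\<in>rho a b ` K. rends {t. r t = t})"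
      using cO0 cRR by (intro countable_UN) auto
  qed (rule rends_countable)
  have OP: "Ob \<subseteq> PL \<times> PR"
  proof
    fix pq assume pqO: "pq \<in> Ob"
    then obtain x where x0: "x \<in> K" "pq \<in> orbs x" unfolding Ob_def by blast
    obtain p q where pq: "pq = (p, q)" by (cases pq)
    have x: "x \<in> K" "(p, q) \<in> orbs x" "pq = (p, q)" using x0 pq by auto
    have o: "p < q" "x p = p" "x q = q" "\<And>t. p < t \<Longrightarrow> t < q \<Longrightarrow> x t \<noteq> t" using x(2) unfolding orbs_def by auto
    have IU: "I (p, q) \<subseteq> U" using pqO x(3) unfolding U_def by auto
    have "p \<in> PL"
    proof (cases "p \<in> U")
      case True
      then obtain a b where ab: "(a, b) \<in> O0" "a < p" "p < b" using U0 unfolding I_def by auto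
      have r1: "rho a b x p = p" using o(2) unfolding rho_def by simp
      have r2: "\<forall>t. p < t \<and> t < min q b \<longrightarrow> rho a b x t \<noteq> t" using o(4) ab unfolding rho_def by auto
      have r3: "p < min q b" using o(1) ab by simp
      have "p \<in> lends {t. rho a b x t = t}" unfolding lends_def using r1 r2 r3 by blast
      then show ?thesis unfolding PL_def using ab(1) x(1) by blast
    next
      case False
      have "p \<in> lends (- U)" unfolding lends_def
        using False o(1) IU unfolding I_def by (auto intro!: exI[where x=q])
      then show ?thesis unfolding PL_def by blast
    qed
    moreover have "q \<in> PR"
    proof (cases "q \<in> U")
      case True
      then obtain a b where ab: "(a, b) \<in> O0" "a < q" "q < b" using U0 unfolding I_def by auto
      have r1: "rho a b x q = q" using o(3) unfolding rho_def by simp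
      have r2: "\<forall>t. max p a < t \<and> t < q \<longrightarrow> rho a b x t \<noteq> t" using o(4) ab unfolding rho_def by auto
      have r3: "max p a < q" using o(1) ab by simp
      have "q \<in> rends {t. rho a b x t = t}" unfolding rends_def using r1 r2 r3 by blast
      then show ?thesis unfolding PR_def using ab(1) x(1) by blast
    next
      case False
      have "q \<in> rends (- U)" unfolding rends_def
        using False o(1) IU unfolding I_def by (auto intro!: exI[where x=p])
      then show ?thesis unfolding PR_def by blast
    qed
    ultimately show "pq \<in> PL \<times> PR" using x(3) by simp
  qed
  have cO: "countable Ob" using countable_subset[OF OP] cPL cPR by simp
  define W where "W = (\<Union>(a, b)\<in>Ob. rho a b ` K)"
  have cW: "countable W" unfolding W_def using cO cR by (auto intro!: countable_UN)
  define R where "R x = (\<lambda>(p, q). rho p q x) ` orbs x" for x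
  have RW: "R x \<in> {A. finite A \<and> A \<subseteq> W}" if x: "x \<in> K" for x
    unfolding R_def W_def Ob_def using orbs_finite[OF KP[OF x]] x by auto
  have inj: "inj_on R K"
  proof (rule inj_onI)
    fix x y assume xy: "x \<in> K" "y \<in> K" "R x = R y"
    have dir: "u t = v t" if uv: "u \<in> K" "v \<in> K" "R u = R v" and ut: "u t \<noteq> t" for u v t
    proof -
      obtain p q where pq: "(p, q) \<in> orbs u" "p < t" "t < q" using orbs_cover[OF KP[OF uv(1)] ut] by auto
      have "rho p q u \<in> R v" using uv(3) pq(1) unfolding R_def by (metis (no_types, lifting) case_prod_conv imageI)
      then obtain p' q' where pq': "(p', q') \<in> orbs v" "rho p q u = rho p' q' v" unfolding R_def by auto
      have "rho p q u t = u t" unfolding rho_def using pq by simp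
      then have "rho p' q' v t = u t" using pq'(2) by simp
      then show "u t = v t" using ut unfolding rho_def by (auto split: if_splits)
    qed
    show "x = y"
    proof
      fix t show "x t = y t"
      proof (cases "x t = t")
        case True
        show ?thesis
        proof (cases "y t = t")
          case False then show ?thesis using dir[OF xy(2) xy(1) xy(3)[symmetric] False] by simp
        qed (use True in simp)
      next
        case False then show ?thesis using dir[OF xy False] by simp
      qed
    qed
  qed
  have "R ` K \<subseteq> {A. finite A \<and> A \<subseteq> W}" using RW by blast
  then have "countable (R ` K)" using countable_Collect_finite_subset[OF cW] countable_subset by blast
  then show ?thesis using countable_image_inj_on inj by blast
qed


lemma GH_one: "\<one>\<^bsub>GH H\<^esub> = id" by (simp add: PLo_group_def)
lemma GH_mult: "x \<otimes>\<^bsub>GH H\<^esub> y = x \<circ> y" by (simp add: PLo_group_def)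
lemma GH_carrier: "carrier (GH H) = H" by simp

lemma derived_countable:
  assumes pg: "pgrp H"
  shows "subgroup K (GH H) \<Longrightarrow> (derived (GH H) ^^ n) K = {id} \<Longrightarrow> countable K"
proof (induction n arbitrary: K)
  case 0
  then show ?case by simp
next
  case (Suc n)
  interpret G: group "GH H" using group_GH[OF pg] .
  have Ksub: "K \<subseteq> carrier (GH H)" using subgroup.subset[OF Suc.prems(1)] .
  define D where "D = derived (GH H) K"
  have sD: "subgroup D (GH H)" unfolding D_def using G.derived_is_subgroup[OF Ksub] .
  have "(derived (GH H) ^^ n) D = {id}" unfolding D_def using Suc.prems(2) by (simp add: funpow_swap1 id_def)
  then have cD: "countable D" using Suc.IH sD by blast
  have pK: "pgrp K" using subgroup_GH_pgrp[OF pg Suc.prems(1)] .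
  have KH: "K \<subseteq> H" using Ksub by simp
  have comm: "\<forall>x\<in>K. \<forall>y\<in>K. x \<circ> y \<circ> finv x \<circ> finv y \<in> D"
  proof (intro ballI)
    fix x y assume xy: "x \<in> K" "y \<in> K"
    have "x \<otimes>\<^bsub>GH H\<^esub> y \<otimes>\<^bsub>GH H\<^esub> inv\<^bsub>GH H\<^esub> x \<otimes>\<^bsub>GH H\<^esub> inv\<^bsub>GH H\<^esub> y \<in> derived_set (GH H) K"
      using xy by blast
    then have "x \<otimes>\<^bsub>GH H\<^esub> y \<otimes>\<^bsub>GH H\<^esub> inv\<^bsub>GH H\<^esub> x \<otimes>\<^bsub>GH H\<^esub> inv\<^bsub>GH H\<^esub> y \<in> D"
      unfolding D_def derived_def by (rule generate.incl)
    moreover have "inv\<^bsub>GH H\<^esub> x = finv x" "inv\<^bsub>GH H\<^esub> y = finv y" using inv_GH[OF pg] xy KH by auto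
    ultimately show "x \<circ> y \<circ> finv x \<circ> finv y \<in> D" by (simp add: PLo_group_def)
  qed
  show ?case using STEP[OF pK cD comm] .
qed

theorem corollary1:
  assumes "subgroup H PLo_group"
    and "solvable (PLo_group\<lparr>carrier := H\<rparr>)"
  shows "countable H"
proof -
  have pg: "pgrp H" using subgroup_pgrp[OF assms(1)] .
  interpret G: group "GH H" using group_GH[OF pg] .
  obtain n where n: "(derived (GH H) ^^ n) (carrier (GH H)) = {\<one>\<^bsub>GH H\<^esub>}"
    using G.solvable_iff_trivial_derived_seq assms(2) by blast
  have "subgroup H (GH H)" using G.subgroup_self by simp
  moreover have "(derived (GH H) ^^ n) H = {id}" using n by (simp add: GH_one)
  ultimately show ?thesis using derived_countable[OF pg] by blast
qed


end
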